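(* Let $V=\mathbb R^{p,q}$, $p=p'+p''$ with $p'\equiv3\pmod4$, and $W$ a $C\ell^0(V)$-module. Then $\Pi\mapsto b(\Pi)$ is an injective linear map from the space $(\wedge^2W^*\otimes V)^{\mathfrak o(V)}$ of $\mathfrak o(V)$-equivariant linear maps $\wedge^2W\to V$ into the space of $\hat K(p',p'')$-invariant symmetric bilinear forms on $W$.
   Context: Let $V=\mathbb{R}^{p,q}$ be $\mathbb R^{p+q}$ with the scalar product $\langle x,y\rangle=\sum_{i=1}^{p}x^iy^i-\sum_{j=p+1}^{p+q}x^jy^j$ and its standard orthonormal basis. The Clifford algebra $C\ell(V)=C\ell_{p,q}$ is generated by $V$ subject to $xy+yx=-2\langle x,y\rangle 1$, with even part $C\ell^0(V)$; $\mathrm{Pin}$ and $\mathrm{Spin}=\mathrm{Pin}\cap C\ell^0$ as usual. Identify $\mathfrak{o}(V)=\wedge^2V$ via $(x\wedge y)(z)=\langle y,z\rangle x-\langle x,z\rangle y$; $x\wedge y\mapsto-\frac14(xy-yx)$ identifies $\mathfrak o(V)$ with $\mathfrak{spin}(V)$, through which $\mathfrak o(V)$ acts on $C\ell^0(V)$-modules. $e_1,\dots,e_{p'}$ are the first $p'$ standard basis vectors; $b(\Pi)(s,t)=\langle e_1,\Pi(e_2\cdots e_{p'}s\wedge t)\rangle$. $\hat K(p',p'')\subset\mathrm{Spin}(p,q)$ is the subgroup generated by $\mathrm{Spin}(p')\cdot\mathrm{Spin}_0(p'',q)$ (the connected subgroup generated by $\mathrm{Spin}$ of the span of $e_1,\dots,e_{p'}$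 and $\mathrm{Spin}_0$ of its orthogonal complement) and $\iota(\mathrm{Pin}(q))$, where $\iota:C\ell(\mathbb R^{q,0})\to C\ell^0_{p,q}$ is the algebra embedding extending $x\mapsto e_1\cdots e_{p'}\,x'$, with $x\mapsto x'$ sending the $k$-th standard basis vector of $\mathbb R^q$ to the $(p+k)$-th standard basis vector of $V$; $\hat K$ acts on $W$ through $\mathrm{Spin}(p,q)\subset C\ell^0_{p,q}$. *)

theory Defs
  imports "HOL-Analysis.Analysis"
begin

text \<open>Indices are 0-based: the paper's e_k is index k-1.  n = p+q.
  Vectors of V are functions nat => real vanishing at indices >= n.
  Clifford elements are functions (nat set => real), the coefficient of the
  basis blade e_A = e_{a1} ... e_{ak} (a1 < ... < ak), supported on subsets of {0..<n}.\<close>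

type_synonym vec = "nat \<Rightarrow> real"
type_synonym cl = "nat set \<Rightarrow> real"

definition metric :: "nat \<Rightarrow> nat \<Rightarrow> real" where
  "metric p i = (if i < p then 1 else -1)"

definition in_V :: "nat \<Rightarrow> vec \<Rightarrow> bool" where
  "in_V n x \<longleftrightarrow> (\<forall>i\<ge>n. x i = 0)"

definition vinner :: "nat \<Rightarrow> nat \<Rightarrow> vec \<Rightarrow> vec \<Rightarrow> real" where
  "vinner p q x y = (\<Sum>i<p+q. metric p i * x i * y i)"

definition unit_vec :: "nat \<Rightarrow> vec" where
  "unit_vec k = (\<lambda>i. if i = k then 1 else 0)"

definition wedge_act :: "nat \<Rightarrow> nat \<Rightarrow> vec \<Rightarrow> vec \<Rightarrow> vec \<Rightarrow> vec" where
  "wedge_act p q x y z = (\<lambda>i. vinner p q y z * x i - vinner p q x z * y i)"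

definition in_cl :: "nat \<Rightarrow> cl \<Rightarrow> bool" where
  "in_cl n a \<longleftrightarrow> (\<forall>A. a A \<noteq> 0 \<longrightarrow> A \<subseteq> {0..<n})"

definition cl_even :: "cl \<Rightarrow> bool" where
  "cl_even a \<longleftrightarrow> (\<forall>A. a A \<noteq> 0 \<longrightarrow> even (card A))"

text \<open>e_A e_B = blade_sign A B * e_{A symdiff B}, using e_i e_j = - e_j e_i (i ~= j)
  and e_i e_i = - <e_i,e_i>.\<close>
definition blade_sign :: "nat \<Rightarrow> nat set \<Rightarrow> nat set \<Rightarrow> real" where
  "blade_sign p A B = (-1) ^ card {(a, b). a \<in> A \<and> b \<in> B \<and> b < a}
      * (\<Prod>i\<in>A \<inter> B. - metric p i)"

definition cl_mult :: "nat \<Rightarrow> nat \<Rightarrow> cl \<Rightarrow> cl \<Rightarrow> cl" where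
  "cl_mult p q a b = (\<lambda>C. \<Sum>A\<in>Pow {0..<p+q}. \<Sum>B\<in>Pow {0..<p+q}.
      if (A - B) \<union> (B - A) = C then blade_sign p A B * a A * b B else 0)"

definition cl_one :: cl where
  "cl_one = (\<lambda>A. if A = {} then 1 else 0)"

definition cl_add :: "cl \<Rightarrow> cl \<Rightarrow> cl" where
  "cl_add a b = (\<lambda>A. a A + b A)"

definition cl_scale :: "real \<Rightarrow> cl \<Rightarrow> cl" where
  "cl_scale c a = (\<lambda>A. c * a A)"

definition cl_blade :: "nat set \<Rightarrow> cl" where
  "cl_blade S = (\<lambda>A. if A = S then 1 else 0)"

definition cl_vec :: "nat \<Rightarrow> vec \<Rightarrow> cl" where
  "cl_vec n x = (\<lambda>A. if A \<subseteq> {0..<n} \<and> card A = 1 then x (the_elem A) else 0)"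

text \<open>image of x wedge y in spin(V): -1/4 (xy - yx)\<close>
definition spin_elem :: "nat \<Rightarrow> nat \<Rightarrow> vec \<Rightarrow> vec \<Rightarrow> cl" where
  "spin_elem p q x y = (\<lambda>A. - (1/4) * (cl_mult p q (cl_vec (p+q) x) (cl_vec (p+q) y) A
                                    - cl_mult p q (cl_vec (p+q) y) (cl_vec (p+q) x) A))"

fun cl_pow :: "nat \<Rightarrow> nat \<Rightarrow> cl \<Rightarrow> nat \<Rightarrow> cl" where
  "cl_pow p q a 0 = cl_one"
| "cl_pow p q a (Suc k) = cl_mult p q a (cl_pow p q a k)"

definition cl_exp :: "nat \<Rightarrow> nat \<Rightarrow> cl \<Rightarrow> cl" where
  "cl_exp p q a = (\<lambda>A. \<Sum>k. cl_pow p q a k A / fact k)"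

definition cl0_module :: "nat \<Rightarrow> nat \<Rightarrow> (cl \<Rightarrow> 'w::real_vector \<Rightarrow> 'w) \<Rightarrow> bool" where
  "cl0_module p q \<rho> \<longleftrightarrow>
     (\<forall>a. in_cl (p+q) a \<and> cl_even a \<longrightarrow> linear (\<rho> a)) \<and>
     \<rho> cl_one = id \<and>
     (\<forall>a b. in_cl (p+q) a \<and> cl_even a \<and> in_cl (p+q) b \<and> cl_even b \<longrightarrow>
         \<rho> (cl_add a b) = (\<lambda>w. \<rho> a w + \<rho> b w) \<and>
         \<rho> (cl_mult p q a b) = \<rho> a \<circ> \<rho> b) \<and>
     (\<forall>a c. in_cl (p+q) a \<and> cl_even a \<longrightarrow> \<rho> (cl_scale c a) = (\<lambda>w. c *\<^sub>R \<rho> a w))"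

inductive_set cl_gen_group :: "nat \<Rightarrow> nat \<Rightarrow> cl set \<Rightarrow> cl set" for p q S where
  one: "cl_one \<in> cl_gen_group p q S"
| gen: "g \<in> S \<Longrightarrow> g \<in> cl_gen_group p q S"
| inv: "g \<in> S \<Longrightarrow> in_cl (p+q) h \<Longrightarrow> cl_mult p q g h = cl_one \<Longrightarrow> cl_mult p q h g = cl_one
         \<Longrightarrow> h \<in> cl_gen_group p q S"
| mult: "g \<in> cl_gen_group p q S \<Longrightarrow> h \<in> cl_gen_group p q S
         \<Longrightarrow> cl_mult p q g h \<in> cl_gen_group p q S"

text \<open>Spin(p') = Pin(p') cap Cl^0 for the span of e_1..e_{p'}: generated by products
  u v of two unit vectors of that span.\<close>
definition spin_p'_gens :: "nat \<Rightarrow> nat \<Rightarrow> nat \<Rightarrow> cl set" where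
  "spin_p'_gens p q p' = {cl_mult p q (cl_vec (p+q) u) (cl_vec (p+q) v) | u v.
      (\<forall>i. i \<ge> p' \<longrightarrow> u i = 0) \<and> (\<forall>i. i \<ge> p' \<longrightarrow> v i = 0) \<and>
      \<bar>vinner p q u u\<bar> = 1 \<and> \<bar>vinner p q v v\<bar> = 1}"

text \<open>Spin_0 of the orthogonal complement span(e_{p'+1},...,e_{p+q}): the connected
  subgroup generated by exponentials of its Lie algebra spin(p'',q), the bivectors
  supported in the complement.\<close>
definition spin0_gens :: "nat \<Rightarrow> nat \<Rightarrow> nat \<Rightarrow> cl set" where
  "spin0_gens p q p' = {cl_exp p q a | a.
      \<forall>A. a A \<noteq> 0 \<longrightarrow> A \<subseteq> {p'..<p+q} \<and> card A = 2}"

text \<open>iota(Pin(q)) is generated by iota(x) = e_1...e_{p'} x' for unit vectors x of R^{q,0};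
  x' is the vector with components x'_{p+k} = x_k.\<close>
definition iota_pin_gens :: "nat \<Rightarrow> nat \<Rightarrow> nat \<Rightarrow> cl set" where
  "iota_pin_gens p q p' = {cl_mult p q (cl_blade {0..<p'}) (cl_vec (p+q) x') | x'.
      (\<forall>i. i < p \<or> i \<ge> p+q \<longrightarrow> x' i = 0) \<and> (\<Sum>i\<in>{p..<p+q}. (x' i)\<^sup>2) = 1}"

definition K_hat :: "nat \<Rightarrow> nat \<Rightarrow> nat \<Rightarrow> cl set" where
  "K_hat p q p' = cl_gen_group p q (spin_p'_gens p q p' \<union> spin0_gens p q p' \<union> iota_pin_gens p q p')"

text \<open>(wedge^2 W^* tensor V)^{o(V)}: skew bilinear maps W x W -> V, equivariant for o(V)
  (acting on W through spin(V)).\<close>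
definition equiv_maps :: "nat \<Rightarrow> nat \<Rightarrow> (cl \<Rightarrow> 'w::real_vector \<Rightarrow> 'w)
     \<Rightarrow> ('w \<Rightarrow> 'w \<Rightarrow> vec) set" where
  "equiv_maps p q \<rho> = {Pm.
     (\<forall>i. bilinear (\<lambda>s t. Pm s t i)) \<and>
     (\<forall>s t. Pm s t = (\<lambda>i. - Pm t s i)) \<and>
     (\<forall>s t. in_V (p+q) (Pm s t)) \<and>
     (\<forall>x y s t. in_V (p+q) x \<and> in_V (p+q) y \<longrightarrow>
        (\<lambda>i. Pm (\<rho> (spin_elem p q x y) s) t i + Pm s (\<rho> (spin_elem p q x y) t) i)
          = wedge_act p q x y (Pm s t))}"

text \<open>b(Pi)(s,t) = < e_1, Pi(e_2 ... e_{p'} s wedge t) >\<close>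
definition b_form :: "nat \<Rightarrow> nat \<Rightarrow> nat \<Rightarrow> (cl \<Rightarrow> 'w \<Rightarrow> 'w) \<Rightarrow> ('w \<Rightarrow> 'w \<Rightarrow> vec)
     \<Rightarrow> 'w \<Rightarrow> 'w \<Rightarrow> real" where
  "b_form p q p' \<rho> Pm s t = vinner p q (unit_vec 0) (Pm (\<rho> (cl_blade {1..<p'}) s) t)"

definition invariant_sym_forms :: "nat \<Rightarrow> nat \<Rightarrow> nat \<Rightarrow> (cl \<Rightarrow> 'w::real_vector \<Rightarrow> 'w)
     \<Rightarrow> ('w \<Rightarrow> 'w \<Rightarrow> real) set" where
  "invariant_sym_forms p q p' \<rho> = {\<beta>. bilinear \<beta> \<and> (\<forall>s t. \<beta> s t = \<beta> t s) \<and>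
     (\<forall>g\<in>K_hat p q p'. \<forall>s t. \<beta> (\<rho> g s) (\<rho> g t) = \<beta> s t)}"

end

theory Submission
  imports Defs
begin

abbreviation "sd A B \<equiv> (A - B) \<union> (B - A)"

lemma blade_mult:
  assumes "A \<subseteq> {0..<p+q}" "B \<subseteq> {0..<p+q}"
  shows "cl_mult p q (cl_blade A) (cl_blade B) = cl_scale (blade_sign p A B) (cl_blade (sd A B))"
proof (rule ext)
  fix C
  have "cl_mult p q (cl_blade A) (cl_blade B) C =
    (\<Sum>A'\<in>Pow {0..<p+q}. \<Sum>B'\<in>Pow {0..<p+q}.
       if B' = B then (if A' = A then (if sd A B = C then blade_sign p A B else 0) else 0) else 0)"
    unfolding cl_mult_def cl_blade_def
    by (intro sum.cong refl) auto
  also have "\<dots> = (if sd A B = C then blade_sign p A B else 0)"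
    using assms by (simp add: sum.delta)
  finally show "cl_mult p q (cl_blade A) (cl_blade B) C = cl_scale (blade_sign p A B) (cl_blade (sd A B)) C"
    by (simp add: cl_scale_def cl_blade_def)
qed

definition tau :: "nat \<Rightarrow> nat \<Rightarrow> real" where "tau a b = (if b < a then -1 else 1)"

definition TT :: "nat set \<Rightarrow> nat set \<Rightarrow> real" where
  "TT A B = (\<Prod>a\<in>A. \<Prod>b\<in>B. tau a b)"

definition FF :: "nat \<Rightarrow> nat set \<Rightarrow> real" where
  "FF p X = (\<Prod>i\<in>X. - metric p i)"

lemma sign_as_prod:
  assumes "finite A" "finite B"
  shows "(-1::real) ^ card {(a, b). a \<in> A \<and> b \<in> B \<and> b < a} = TT A B"
proof -
  have e: "{(a, b). a \<in> A \<and> b \<in> B \<and> b < a} = (SIGMA a:A. {b\<in>B. b < a})" by auto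
  have "card {(a, b). a \<in> A \<and> b \<in> B \<and> b < a} = (\<Sum>a\<in>A. card {b\<in>B. b < a})"
    unfolding e using assms by simp
  hence "(-1::real) ^ card {(a, b). a \<in> A \<and> b \<in> B \<and> b < a} = (\<Prod>a\<in>A. (-1) ^ card {b\<in>B. b < a})"
    by (simp add: power_sum)
  also have "\<dots> = TT A B"
    unfolding TT_def tau_def
  proof (rule prod.cong[OF refl])
    fix a assume "a \<in> A"
    have "(\<Prod>b\<in>{b\<in>B. b < a}. -1) = (\<Prod>b\<in>B. if b < a then -1 else 1::real)"
      by (rule prod.inter_filter[OF assms(2)])
    thus "(-1::real) ^ card {b \<in> B. b < a} = (\<Prod>b\<in>B. if b < a then -1 else 1)" by simp
  qed
  finally show ?thesis .
qed

lemma blade_sign_TF: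
  assumes "finite A" "finite B"
  shows "blade_sign p A B = TT A B * FF p (A \<inter> B)"
  unfolding blade_sign_def FF_def using sign_as_prod[OF assms] by simp

lemma prod_sd:
  fixes h :: "nat \<Rightarrow> real"
  assumes "finite A" "finite B" "\<And>x. h x * h x = 1"
  shows "prod h (sd A B) = prod h A * prod h B"
proof -
  have a: "prod h A = prod h (A - B) * prod h (A \<inter> B)"
  proof -
    have "A = (A - B) \<union> (A \<inter> B)" by auto
    hence "prod h A = prod h ((A - B) \<union> (A \<inter> B))" by simp
    also have "\<dots> = prod h (A - B) * prod h (A \<inter> B)"
      using assms by (intro prod.union_disjoint) auto
    finally show ?thesis .
  qed
  have b: "prod h B = prod h (B - A) * prod h (A \<inter> B)"
  proof -
    have "B = (B - A) \<union> (A \<inter> B)" by auto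
    hence "prod h B = prod h ((B - A) \<union> (A \<inter> B))" by simp
    also have "\<dots> = prod h (B - A) * prod h (A \<inter> B)"
      using assms by (intro prod.union_disjoint) auto
    finally show ?thesis .
  qed
  have c: "prod h (A \<inter> B) * prod h (A \<inter> B) = 1"
    by (simp add: assms(3) flip: prod.distrib)
  have d: "prod h (sd A B) = prod h (A - B) * prod h (B - A)"
    using assms by (intro prod.union_disjoint) auto
  have "prod h A * prod h B = (prod h (A - B) * prod h (B - A)) * (prod h (A \<inter> B) * prod h (A \<inter> B))"
    unfolding a b by (simp add: ac_simps)
  thus ?thesis unfolding d c by simp
qed

lemma tau_sq: "tau a b * tau a b = 1" by (simp add: tau_def)

lemma TT_sq: "TT A B * TT A B = 1"
  by (simp add: TT_def tau_sq flip: prod.distrib)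

lemma FF_sq: "- metric p i * - metric p i = 1"
  by (simp add: metric_def)

lemma TT_sd_left:
  assumes "finite A" "finite B"
  shows "TT (sd A B) C = TT A C * TT B C"
  unfolding TT_def
  by (rule prod_sd[OF assms]) (simp add: tau_sq flip: prod.distrib)

lemma TT_sd_right:
  assumes "finite B" "finite C"
  shows "TT A (sd B C) = TT A B * TT A C"
  unfolding TT_def
  by (simp add: prod_sd[OF assms] tau_sq prod.distrib)

lemma FF_sd:
  assumes "finite A" "finite B"
  shows "FF p (sd A B) = FF p A * FF p B"
  unfolding FF_def by (rule prod_sd[OF assms FF_sq])

lemma cocycle:
  assumes "finite A" "finite B" "finite C"
  shows "blade_sign p A B * blade_sign p (sd A B) C = blade_sign p B C * blade_sign p A (sd B C)"
proof -
  have e1: "sd A B \<inter> C = sd (A \<inter> C) (B \<inter> C)" by auto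
  have e2: "A \<inter> sd B C = sd (A \<inter> B) (A \<inter> C)" by auto
  show ?thesis
    using assms unfolding blade_sign_TF[OF assms(1,2)] blade_sign_TF[OF assms(2,3)]
    apply (subst blade_sign_TF, simp, simp)
    apply (subst blade_sign_TF, simp, simp)
    unfolding TT_sd_left[OF assms(1,2)] TT_sd_right[OF assms(2,3)] e1 e2
    apply (subst FF_sd, simp, simp)
    apply (subst FF_sd, simp, simp)
    by (simp add: ac_simps)
qed

lemma sum4_collapse_left:
  assumes "finite S" "\<And>A B. A \<in> S \<Longrightarrow> B \<in> S \<Longrightarrow> f A B \<in> S"
  shows "(\<Sum>X\<in>S. \<Sum>C\<in>S. \<Sum>A\<in>S. \<Sum>B\<in>S. if f A B = X then g X C A B else 0)
       = (\<Sum>A\<in>S. \<Sum>B\<in>S. \<Sum>C\<in>S. (g (f A B) C A B :: real))"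
proof -
  have "(\<Sum>X\<in>S. \<Sum>C\<in>S. \<Sum>A\<in>S. \<Sum>B\<in>S. if f A B = X then g X C A B else 0)
      = (\<Sum>C\<in>S. \<Sum>X\<in>S. \<Sum>A\<in>S. \<Sum>B\<in>S. if f A B = X then g X C A B else 0)"
    by (rule sum.swap)
  also have "\<dots> = (\<Sum>C\<in>S. \<Sum>A\<in>S. \<Sum>X\<in>S. \<Sum>B\<in>S. if f A B = X then g X C A B else 0)"
    by (intro sum.cong refl sum.swap)
  also have "\<dots> = (\<Sum>C\<in>S. \<Sum>A\<in>S. \<Sum>B\<in>S. \<Sum>X\<in>S. if f A B = X then g X C A B else 0)"
    by (intro sum.cong refl sum.swap)
  also have "\<dots> = (\<Sum>C\<in>S. \<Sum>A\<in>S. \<Sum>B\<in>S. g (f A B) C A B)"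
    using assms by (intro sum.cong refl) (simp add: sum.delta)
  also have "\<dots> = (\<Sum>A\<in>S. \<Sum>C\<in>S. \<Sum>B\<in>S. g (f A B) C A B)"
    by (rule sum.swap)
  also have "\<dots> = (\<Sum>A\<in>S. \<Sum>B\<in>S. \<Sum>C\<in>S. g (f A B) C A B)"
    by (intro sum.cong refl sum.swap)
  finally show ?thesis .
qed

lemma sum4_collapse_right:
  assumes "finite S" "\<And>A B. A \<in> S \<Longrightarrow> B \<in> S \<Longrightarrow> f A B \<in> S"
  shows "(\<Sum>A\<in>S. \<Sum>Y\<in>S. \<Sum>B\<in>S. \<Sum>C\<in>S. if f B C = Y then g A Y B C else 0)
       = (\<Sum>A\<in>S. \<Sum>B\<in>S. \<Sum>C\<in>S. (g A (f B C) B C :: real))"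
proof -
  have "(\<Sum>A\<in>S. \<Sum>Y\<in>S. \<Sum>B\<in>S. \<Sum>C\<in>S. if f B C = Y then g A Y B C else 0)
      = (\<Sum>A\<in>S. \<Sum>B\<in>S. \<Sum>Y\<in>S. \<Sum>C\<in>S. if f B C = Y then g A Y B C else 0)"
    by (intro sum.cong refl sum.swap)
  also have "\<dots> = (\<Sum>A\<in>S. \<Sum>B\<in>S. \<Sum>C\<in>S. \<Sum>Y\<in>S. if f B C = Y then g A Y B C else 0)"
    by (intro sum.cong refl sum.swap)
  also have "\<dots> = (\<Sum>A\<in>S. \<Sum>B\<in>S. \<Sum>C\<in>S. g A (f B C) B C)"
    using assms by (intro sum.cong refl) (simp add: sum.delta)
  finally show ?thesis .
qed

lemma if_sum_pull:
  "finite I \<Longrightarrow> (if P then a * (\<Sum>i\<in>I. f i) * b else 0) = (\<Sum>i\<in>I. if P then a * f i * b else (0::real))"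
  by (simp add: sum_distrib_left sum_distrib_right)

lemma cl_mult_assoc:
  "cl_mult p q (cl_mult p q x y) z = cl_mult p q x (cl_mult p q y z)"
proof (rule ext)
  fix D
  let ?S = "Pow {0..<p+q}"
  let ?sg = "blade_sign p"
  have fin: "finite ?S" by simp
  have clo: "\<And>A B. A \<in> ?S \<Longrightarrow> B \<in> ?S \<Longrightarrow> sd A B \<in> ?S" by auto
  have L: "cl_mult p q (cl_mult p q x y) z D =
     (\<Sum>X\<in>?S. \<Sum>C\<in>?S. \<Sum>A\<in>?S. \<Sum>B\<in>?S. if sd A B = X then
        (if sd X C = D then ?sg X C * (?sg A B * x A * y B) * z C else 0) else 0)"
    unfolding cl_mult_def
    by (intro sum.cong refl) (simp add: if_sum_pull if_distrib[of "\<lambda>u. _ * u * _"] cong: if_cong, intro sum.cong refl, auto)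
  also have "\<dots> = (\<Sum>A\<in>?S. \<Sum>B\<in>?S. \<Sum>C\<in>?S.
        (if sd (sd A B) C = D then ?sg (sd A B) C * (?sg A B * x A * y B) * z C else 0))"
    by (rule sum4_collapse_left[OF fin clo])
  finally have L': "cl_mult p q (cl_mult p q x y) z D = \<dots>" .
  have R: "cl_mult p q x (cl_mult p q y z) D =
     (\<Sum>A\<in>?S. \<Sum>Y\<in>?S. \<Sum>B\<in>?S. \<Sum>C\<in>?S. if sd B C = Y then
        (if sd A Y = D then ?sg A Y * x A * (?sg B C * y B * z C) else 0) else 0)"
    unfolding cl_mult_def
    by (intro sum.cong refl) (simp add: if_sum_pull sum_distrib_left if_distrib[of "\<lambda>u. _ * u"] cong: if_cong)
  also have "\<dots> = (\<Sum>A\<in>?S. \<Sum>B\<in>?S. \<Sum>C\<in>?S.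
        (if sd A (sd B C) = D then ?sg A (sd B C) * x A * (?sg B C * y B * z C) else 0))"
    by (rule sum4_collapse_right[OF fin clo])
  finally have R': "cl_mult p q x (cl_mult p q y z) D = \<dots>" .
  show "cl_mult p q (cl_mult p q x y) z D = cl_mult p q x (cl_mult p q y z) D"
    unfolding L' R'
  proof (intro sum.cong refl)
    fix A B C assume "A \<in> ?S" "B \<in> ?S" "C \<in> ?S"
    hence f: "finite A" "finite B" "finite C" by (auto intro: finite_subset)
    have "sd (sd A B) C = sd A (sd B C)" by auto
    moreover have "?sg (sd A B) C * ?sg A B = ?sg A (sd B C) * ?sg B C"
      using cocycle[OF f, of p] by (simp add: ac_simps)
    ultimately show "(if sd (sd A B) C = D then ?sg (sd A B) C * (?sg A B * x A * y B) * z C else 0) =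
         (if sd A (sd B C) = D then ?sg A (sd B C) * x A * (?sg B C * y B * z C) else 0)"
      by (simp add: ac_simps)
  qed
qed

lemma if_sum_pull2:
  "finite I \<Longrightarrow> (if P then a * b * (\<Sum>i\<in>I. f i) else 0) = (\<Sum>i\<in>I. if P then a * b * f i else (0::real))"
  by (simp add: sum_distrib_left)

lemma in_cl_mult: "in_cl (p+q) (cl_mult p q x y)"
  unfolding in_cl_def
proof (intro allI impI)
  fix C assume "cl_mult p q x y C \<noteq> 0"
  then obtain A where "A \<in> Pow {0..<p+q}" and nzA:
    "(\<Sum>B\<in>Pow {0..<p+q}. if sd A B = C then blade_sign p A B * x A * y B else 0) \<noteq> 0"
    unfolding cl_mult_def by (rule sum.not_neutral_contains_not_neutral)
  from nzA obtain B where "B \<in> Pow {0..<p+q}" and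
    "(if sd A B = C then blade_sign p A B * x A * y B else 0) \<noteq> 0"
    by (rule sum.not_neutral_contains_not_neutral)
  thus "C \<subseteq> {0..<p+q}" using \<open>A \<in> _\<close> by (auto split: if_splits)
qed

lemma cl_mult_sum_left:
  assumes "finite I"
  shows "cl_mult p q (\<lambda>C. \<Sum>i\<in>I. f i C) y = (\<lambda>C. \<Sum>i\<in>I. cl_mult p q (f i) y C)"
proof (rule ext)
  fix C
  let ?S = "Pow {0..<p+q}"
  have "cl_mult p q (\<lambda>C. \<Sum>i\<in>I. f i C) y C =
     (\<Sum>A\<in>?S. \<Sum>B\<in>?S. \<Sum>i\<in>I. if sd A B = C then blade_sign p A B * f i A * y B else 0)"
    unfolding cl_mult_def using assms by (intro sum.cong refl) (simp add: if_sum_pull)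
  also have "\<dots> = (\<Sum>A\<in>?S. \<Sum>i\<in>I. \<Sum>B\<in>?S. if sd A B = C then blade_sign p A B * f i A * y B else 0)"
    by (intro sum.cong refl sum.swap)
  also have "\<dots> = (\<Sum>i\<in>I. \<Sum>A\<in>?S. \<Sum>B\<in>?S. if sd A B = C then blade_sign p A B * f i A * y B else 0)"
    by (rule sum.swap)
  finally show "cl_mult p q (\<lambda>C. \<Sum>i\<in>I. f i C) y C = (\<Sum>i\<in>I. cl_mult p q (f i) y C)"
    unfolding cl_mult_def .
qed

lemma cl_mult_sum_right:
  assumes "finite I"
  shows "cl_mult p q x (\<lambda>C. \<Sum>i\<in>I. f i C) = (\<lambda>C. \<Sum>i\<in>I. cl_mult p q x (f i) C)"
proof (rule ext)
  fix C
  let ?S = "Pow {0..<p+q}"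
  have "cl_mult p q x (\<lambda>C. \<Sum>i\<in>I. f i C) C =
     (\<Sum>A\<in>?S. \<Sum>B\<in>?S. \<Sum>i\<in>I. if sd A B = C then blade_sign p A B * x A * f i B else 0)"
    unfolding cl_mult_def using assms by (intro sum.cong refl) (simp add: if_sum_pull2)
  also have "\<dots> = (\<Sum>A\<in>?S. \<Sum>i\<in>I. \<Sum>B\<in>?S. if sd A B = C then blade_sign p A B * x A * f i B else 0)"
    by (intro sum.cong refl sum.swap)
  also have "\<dots> = (\<Sum>i\<in>I. \<Sum>A\<in>?S. \<Sum>B\<in>?S. if sd A B = C then blade_sign p A B * x A * f i B else 0)"
    by (rule sum.swap)
  finally show "cl_mult p q x (\<lambda>C. \<Sum>i\<in>I. f i C) C = (\<Sum>i\<in>I. cl_mult p q x (f i) C)"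
    unfolding cl_mult_def .
qed

lemma cl_mult_scale_left: "cl_mult p q (cl_scale c x) y = cl_scale c (cl_mult p q x y)"
  unfolding cl_mult_def cl_scale_def
  by (rule ext) (simp add: sum_distrib_left if_distrib[of "\<lambda>u. c * u"] ac_simps cong: if_cong)

lemma cl_mult_scale_right: "cl_mult p q x (cl_scale c y) = cl_scale c (cl_mult p q x y)"
  unfolding cl_mult_def cl_scale_def
  by (rule ext) (simp add: sum_distrib_left if_distrib[of "\<lambda>u. c * u"] ac_simps cong: if_cong)

lemma cl_mult_add_left: "cl_mult p q (cl_add x y) z = cl_add (cl_mult p q x z) (cl_mult p q y z)"
  unfolding cl_mult_def cl_add_def
  by (rule ext) (simp add: sum.distrib[symmetric] distrib_left distrib_right, intro sum.cong refl, auto simp: algebra_simps)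

lemma cl_mult_add_right: "cl_mult p q x (cl_add y z) = cl_add (cl_mult p q x y) (cl_mult p q x z)"
  unfolding cl_mult_def cl_add_def
  by (rule ext) (simp add: sum.distrib[symmetric] distrib_left distrib_right, intro sum.cong refl, auto simp: algebra_simps)

lemma blade_sign_empty_left[simp]: "blade_sign p {} B = 1"
  by (simp add: blade_sign_def)

lemma blade_sign_empty_right[simp]: "blade_sign p A {} = 1"
  by (simp add: blade_sign_def)

lemma cl_one_mult:
  assumes "in_cl (p+q) x"
  shows "cl_mult p q cl_one x = x"
proof (rule ext)
  fix C
  let ?S = "Pow {0..<p+q}"
  have "cl_mult p q cl_one x C = (\<Sum>A\<in>?S. \<Sum>B\<in>?S. if A = {} then (if B = C then x B else 0) else 0)"
    unfolding cl_mult_def cl_one_def by (intro sum.cong refl) auto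
  also have "\<dots> = (\<Sum>B\<in>?S. \<Sum>A\<in>?S. if A = {} then (if B = C then x B else 0) else 0)"
    by (rule sum.swap)
  also have "\<dots> = (\<Sum>B\<in>?S. if B = C then x B else 0)"
    by (intro sum.cong refl) (simp add: sum.delta)
  also have "\<dots> = x C"
    using assms unfolding in_cl_def by (simp add: sum.delta') blast
  finally show "cl_mult p q cl_one x C = x C" .
qed

lemma cl_mult_one:
  assumes "in_cl (p+q) x"
  shows "cl_mult p q x cl_one = x"
proof (rule ext)
  fix C
  let ?S = "Pow {0..<p+q}"
  have "cl_mult p q x cl_one C = (\<Sum>A\<in>?S. \<Sum>B\<in>?S. if B = {} then (if A = C then x A else 0) else 0)"
    unfolding cl_mult_def cl_one_def by (intro sum.cong refl) auto
  also have "\<dots> = (\<Sum>A\<in>?S. if A = C then x A else 0)"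
    by (intro sum.cong refl) (simp add: sum.delta)
  also have "\<dots> = x C"
    using assms unfolding in_cl_def by (simp add: sum.delta') blast
  finally show "cl_mult p q x cl_one C = x C" .
qed

lemma card_sd:
  assumes "finite A" "finite B"
  shows "card (sd A B) + 2 * card (A \<inter> B) = card A + card B"
proof -
  have "card (sd A B) = card (A - B) + card (B - A)"
    using assms by (intro card_Un_disjoint) auto
  moreover have "card A = card (A - B) + card (A \<inter> B)"
  proof -
    have "A = (A - B) \<union> (A \<inter> B)" by auto
    hence "card A = card ((A - B) \<union> (A \<inter> B))" by simp
    also have "\<dots> = card (A - B) + card (A \<inter> B)" using assms by (intro card_Un_disjoint) auto
    finally show ?thesis .
  qed
  moreover have "card B = card (B - A) + card (A \<inter> B)"
  proof -
    have "B = (B - A) \<union> (A \<inter> B)" by auto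
    hence "card B = card ((B - A) \<union> (A \<inter> B))" by simp
    also have "\<dots> = card (B - A) + card (A \<inter> B)" using assms by (intro card_Un_disjoint) auto
    finally show ?thesis .
  qed
  ultimately show ?thesis by simp
qed

lemma cl_mult_parity:
  assumes x: "\<And>A. x A \<noteq> 0 \<Longrightarrow> even (card A) = ex"
    and y: "\<And>B. y B \<noteq> 0 \<Longrightarrow> even (card B) = ey"
    and C: "cl_mult p q x y C \<noteq> 0"
  shows "even (card C) = (ex = ey)"
proof -
  from C obtain A where "A \<in> Pow {0..<p+q}" and nzA:
    "(\<Sum>B\<in>Pow {0..<p+q}. if sd A B = C then blade_sign p A B * x A * y B else 0) \<noteq> 0"
    unfolding cl_mult_def by (rule sum.not_neutral_contains_not_neutral)
  from nzA obtain B where B: "B \<in> Pow {0..<p+q}" and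
    nz: "(if sd A B = C then blade_sign p A B * x A * y B else 0) \<noteq> 0"
    by (rule sum.not_neutral_contains_not_neutral)
  have fin: "finite A" "finite B" using \<open>A \<in> _\<close> B by (auto intro: finite_subset)
  from nz have "sd A B = C" "x A \<noteq> 0" "y B \<noteq> 0" by (auto split: if_splits)
  hence "even (card A) = ex" "even (card B) = ey" using x y by auto
  moreover have "even (card C + 2 * card (A \<inter> B)) = even (card A + card B)"
    using card_sd[OF fin] \<open>sd A B = C\<close> by simp
  ultimately show ?thesis by auto
qed

lemma cl_even_mult: "cl_even x \<Longrightarrow> cl_even y \<Longrightarrow> cl_even (cl_mult p q x y)"
  unfolding cl_even_def using cl_mult_parity[of x True y True p q] by blast

abbreviation ev :: "nat \<Rightarrow> cl" where "ev a \<equiv> cl_blade {a}"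

lemma cl_blade_empty: "cl_blade {} = cl_one"
  by (simp add: cl_blade_def cl_one_def)

lemma in_cl_blade: "A \<subseteq> {0..<n} \<Longrightarrow> in_cl n (cl_blade A)"
  by (simp add: in_cl_def cl_blade_def)

lemma in_cl_one: "in_cl n cl_one"
  by (simp add: in_cl_def cl_one_def)

lemma cl_vec_unit: "a < n \<Longrightarrow> cl_vec n (unit_vec a) = ev a"
  by (rule ext) (auto simp: cl_vec_def cl_blade_def unit_vec_def card_Suc_eq)

lemma TT_single_left: "finite A \<Longrightarrow> TT {x} A = (\<Prod>b\<in>A. tau x b)"
  by (simp add: TT_def)

lemma TT_single_right: "finite A \<Longrightarrow> TT A {x} = (\<Prod>a\<in>A. tau a x)"
  by (simp add: TT_def)

lemma TT_swap_single:
  assumes "finite A"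
  shows "TT {x} A = (-1) ^ card (A - {x}) * TT A {x}"
proof -
  have "TT {x} A * TT A {x} = (\<Prod>b\<in>A. tau x b * tau b x)"
    using assms by (simp add: TT_single_left TT_single_right prod.distrib)
  also have "\<dots> = (\<Prod>b\<in>A. if b \<noteq> x then -1 else 1)"
    by (intro prod.cong refl) (auto simp: tau_def)
  also have "\<dots> = (\<Prod>b\<in>{b\<in>A. b \<noteq> x}. -1)"
    by (rule prod.inter_filter[symmetric, OF assms])
  also have "\<dots> = (\<Prod>b\<in>A - {x}. -1)"
  proof -
    have "{b\<in>A. b \<noteq> x} = A - {x}" by auto
    thus ?thesis by simp
  qed
  also have "\<dots> = (-1) ^ card (A - {x})" by simp
  finally have "TT {x} A * TT A {x} = (-1) ^ card (A - {x})" .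
  hence "TT {x} A * TT A {x} * TT A {x} = (-1) ^ card (A - {x}) * TT A {x}" by simp
  thus ?thesis by (simp add: mult.assoc TT_sq)
qed

lemma ev_blade_comm:
  assumes "A \<subseteq> {0..<p+q}" "x < p+q"
  shows "cl_mult p q (ev x) (cl_blade A) = cl_scale ((-1) ^ card (A - {x})) (cl_mult p q (cl_blade A) (ev x))"
proof -
  have fA: "finite A" using assms finite_subset by blast
  have "blade_sign p {x} A = (-1) ^ card (A - {x}) * blade_sign p A {x}"
    using fA by (simp add: blade_sign_TF TT_swap_single Int_commute)
  moreover have "sd {x} A = sd A {x}" by auto
  ultimately show ?thesis
    using assms by (simp add: blade_mult cl_scale_def mult.assoc)
qed

lemma ev_anti:
  assumes "a < p+q" "b < p+q" "a \<noteq> b"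
  shows "cl_mult p q (ev b) (ev a) = cl_scale (-1) (cl_mult p q (ev a) (ev b))"
  using ev_blade_comm[of "{a}" p q b] assms by simp

lemma ev_sq:
  assumes "a < p+q"
  shows "cl_mult p q (ev a) (ev a) = cl_scale (- metric p a) cl_one"
proof -
  have e: "{(aa, b). aa = a \<and> b = a \<and> b < aa} = {}" by auto
  have "card {(aa, b). aa = a \<and> b = a \<and> b < aa} = 0" unfolding e by simp
  hence "blade_sign p {a} {a} = - metric p a" unfolding blade_sign_def by simp
  thus ?thesis using assms by (simp add: blade_mult cl_blade_empty)
qed

lemma blade_insert:
  assumes "A \<subseteq> {0..<p+q}" "x < p+q" "\<forall>a\<in>A. x < a"
  shows "cl_blade (insert x A) = cl_mult p q (ev x) (cl_blade A)"
proof -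
  have fA: "finite A" using assms finite_subset by blast
  have xA: "x \<notin> A" using assms by auto
  have "TT {x} A = 1" using fA assms by (auto simp: TT_single_left tau_def intro!: prod.neutral)
  moreover have "{x} \<inter> A = {}" using xA by auto
  ultimately have "blade_sign p {x} A = 1" using fA by (simp add: blade_sign_TF FF_def)
  moreover have "sd {x} A = insert x A" using xA by auto
  ultimately show ?thesis using assms by (simp add: blade_mult cl_scale_def)
qed

lemma cl_vec_expand:
  "cl_vec n x = (\<lambda>C. \<Sum>a<n. x a * ev a C)"
proof (rule ext)
  fix C
  show "cl_vec n x C = (\<Sum>a<n. x a * ev a C)"
  proof (cases "\<exists>a<n. C = {a}")
    case True
    then obtain a where a: "a < n" "C = {a}" by blast
    have "(\<Sum>a'<n. x a' * ev a' C) = (\<Sum>a'<n. if a' = a then x a' else 0)"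
      using a by (intro sum.cong refl) (auto simp: cl_blade_def)
    also have "\<dots> = x a" using a by (simp add: sum.delta)
    finally show ?thesis using a by (simp add: cl_vec_def)
  next
    case False
    hence "(\<Sum>a<n. x a * ev a C) = 0"
      by (intro sum.neutral) (auto simp: cl_blade_def)
    moreover have "cl_vec n x C = 0"
      using False by (auto simp: cl_vec_def card_Suc_eq)
    ultimately show ?thesis by simp
  qed
qed

lemma in_cl_ev: "a < p+q \<Longrightarrow> in_cl (p+q) (ev a)"
  by (rule in_cl_blade) simp

lemma cl_scale_scale: "cl_scale c (cl_scale d x) = cl_scale (c * d) x"
  by (simp add: cl_scale_def mult.assoc)

lemma cl_scale_one: "cl_scale 1 x = x"
  by (simp add: cl_scale_def)

lemma sq3:
  assumes "a < p+q" "in_cl (p+q) z"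
  shows "cl_mult p q (ev a) (cl_mult p q (ev a) z) = cl_scale (- metric p a) z"
  by (simp add: cl_mult_assoc[symmetric] ev_sq assms cl_mult_scale_left cl_one_mult)

lemma anti3:
  assumes "a < p+q" "b < p+q" "a \<noteq> b"
  shows "cl_mult p q (ev b) (cl_mult p q (ev a) z) = cl_scale (-1) (cl_mult p q (ev a) (cl_mult p q (ev b) z))"
  by (simp add: cl_mult_assoc[symmetric] ev_anti[OF assms] cl_mult_scale_left)

lemma pair_comp1:
  assumes "a < p+q" "b < p+q" "c < p+q"
  shows "cl_mult p q (cl_mult p q (ev a) (ev b)) (cl_mult p q (ev b) (ev c))
       = cl_scale (- metric p b) (cl_mult p q (ev a) (ev c))"
  using assms by (simp add: cl_mult_assoc sq3 in_cl_ev cl_mult_scale_right)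

lemma pair_comp2:
  assumes "a < p+q" "b < p+q" "c < p+q" "a \<noteq> b" "b \<noteq> c" "a \<noteq> c"
  shows "cl_mult p q (cl_mult p q (ev b) (ev c)) (cl_mult p q (ev a) (ev b))
       = cl_scale (metric p b) (cl_mult p q (ev a) (ev c))"
proof -
  have 1: "cl_mult p q (ev c) (cl_mult p q (ev a) (ev b)) = cl_scale (-1) (cl_mult p q (ev a) (cl_mult p q (ev c) (ev b)))"
    by (rule anti3) (use assms in auto)
  have 2: "cl_mult p q (ev c) (ev b) = cl_scale (-1) (cl_mult p q (ev b) (ev c))"
    by (rule ev_anti) (use assms in auto)
  have 3: "cl_mult p q (ev b) (cl_mult p q (ev a) (cl_mult p q (ev b) (ev c)))
      = cl_scale (-1) (cl_mult p q (ev a) (cl_mult p q (ev b) (cl_mult p q (ev b) (ev c))))"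
    by (rule anti3) (use assms in auto)
  have "cl_mult p q (cl_mult p q (ev b) (ev c)) (cl_mult p q (ev a) (ev b))
      = cl_mult p q (ev b) (cl_mult p q (ev c) (cl_mult p q (ev a) (ev b)))"
    by (simp only: cl_mult_assoc)
  also have "\<dots> = cl_mult p q (ev b) (cl_mult p q (ev a) (cl_mult p q (ev b) (ev c)))"
    unfolding 1 2 by (simp only: cl_mult_scale_right cl_scale_scale) (simp add: cl_scale_one)
  also have "\<dots> = cl_scale (-1) (cl_mult p q (ev a) (cl_mult p q (ev b) (cl_mult p q (ev b) (ev c))))"
    by (rule 3)
  also have "\<dots> = cl_scale (metric p b) (cl_mult p q (ev a) (ev c))"
    using assms by (simp add: sq3 in_cl_ev cl_mult_scale_right cl_scale_scale)
  finally show ?thesis .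
qed

lemma vinner_unit: "a < p+q \<Longrightarrow> vinner p q (unit_vec a) y = metric p a * y a"
  by (simp add: vinner_def unit_vec_def if_distrib[of "\<lambda>u. _ * u * _"] sum.delta cong: if_cong)

lemma spin_elem_unit:
  assumes "a < p+q" "b < p+q" "a \<noteq> b"
  shows "spin_elem p q (unit_vec a) (unit_vec b) = cl_scale (-1/2) (cl_mult p q (ev a) (ev b))"
  using assms by (simp add: spin_elem_def cl_vec_unit ev_anti[OF assms(2,1) assms(3)[symmetric]] cl_scale_def)

lemma metric_sq: "metric p i * metric p i = 1"
  by (simp add: metric_def)

lemma metric_cases: "metric p i = 1 \<or> metric p i = -1"
  by (simp add: metric_def)

locale CS =
  fixes p q p' p'' :: nat and \<rho> :: "cl \<Rightarrow> 'w::real_vector \<Rightarrow> 'w"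
  assumes pp: "p = p' + p''" and p'mod: "p' mod 4 = 3" and cm: "cl0_module p q \<rho>"
begin

abbreviation "mul \<equiv> cl_mult p q"
definition good :: "cl \<Rightarrow> bool" where "good x \<longleftrightarrow> in_cl (p+q) x \<and> cl_even x"

lemma good_one: "good cl_one"
  unfolding good_def by (simp add: in_cl_one) (simp add: cl_even_def cl_one_def)

lemma good_mult: "good x \<Longrightarrow> good y \<Longrightarrow> good (mul x y)"
  by (simp add: good_def in_cl_mult cl_even_mult)

lemma good_add: "good x \<Longrightarrow> good y \<Longrightarrow> good (cl_add x y)"
  unfolding good_def in_cl_def cl_even_def cl_add_def
  by (metis add.left_neutral add.right_neutral)

lemma good_scale: "good x \<Longrightarrow> good (cl_scale c x)"
  by (auto simp: good_def in_cl_def cl_even_def cl_scale_def)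

lemma good_zero: "good (\<lambda>_. 0)"
  by (auto simp: good_def in_cl_def cl_even_def)

lemma good_sum:
  assumes "finite I" "\<And>i. i \<in> I \<Longrightarrow> good (f i)"
  shows "good (\<lambda>C. \<Sum>i\<in>I. c i * f i C)"
proof -
  have *: "\<exists>i\<in>I. f i A \<noteq> 0" if "(\<Sum>i\<in>I. c i * f i A) \<noteq> 0" for A
    using that by (metis (mono_tags, lifting) mult_zero_right sum.neutral)
  show ?thesis unfolding good_def in_cl_def cl_even_def
    using * assms(2) unfolding good_def in_cl_def cl_even_def by metis
qed

lemma good_blade: "A \<subseteq> {0..<p+q} \<Longrightarrow> even (card A) \<Longrightarrow> good (cl_blade A)"
  unfolding good_def by (simp add: in_cl_blade) (simp add: cl_even_def cl_blade_def)

lemma good_pair: "a < p+q \<Longrightarrow> b < p+q \<Longrightarrow> good (mul (ev a) (ev b))"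
proof -
  have "even (card C)" if "mul (ev a) (ev b) C \<noteq> 0" for C
  proof -
    have h: "\<And>A. ev x A \<noteq> 0 \<Longrightarrow> even (card A) = False" for x
      by (simp add: cl_blade_def split: if_splits)
    show ?thesis using cl_mult_parity[OF h h that] by simp
  qed
  thus ?thesis unfolding good_def cl_even_def by (simp add: in_cl_mult)
qed

lemma rho_lin: "good x \<Longrightarrow> linear (\<rho> x)"
  using cm by (simp add: cl0_module_def good_def)

lemma rho_one: "\<rho> cl_one w = w"
  using cm by (simp add: cl0_module_def)

lemma rho_mult: "good x \<Longrightarrow> good y \<Longrightarrow> \<rho> (mul x y) w = \<rho> x (\<rho> y w)"
  using cm by (simp add: cl0_module_def good_def)

lemma rho_add: "good x \<Longrightarrow> good y \<Longrightarrow> \<rho> (cl_add x y) w = \<rho> x w + \<rho> y w"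
  using cm by (simp add: cl0_module_def good_def)

lemma rho_scale: "good x \<Longrightarrow> \<rho> (cl_scale c x) w = c *\<^sub>R \<rho> x w"
  using cm by (simp add: cl0_module_def good_def)

lemma rho_zero: "\<rho> (\<lambda>_. 0) w = 0"
proof -
  have "(\<lambda>_. 0) = cl_scale 0 cl_one" by (simp add: cl_scale_def)
  thus ?thesis using rho_scale[OF good_one, of 0] by simp
qed

lemma rho_sum:
  assumes "finite I" "\<And>i. i \<in> I \<Longrightarrow> good (f i)"
  shows "\<rho> (\<lambda>C. \<Sum>i\<in>I. c i * f i C) w = (\<Sum>i\<in>I. c i *\<^sub>R \<rho> (f i) w)"
  using assms
proof (induction I rule: finite_induct)
  case empty
  then show ?case by (simp add: rho_zero)
next
  case (insert i I)
  have e: "(\<lambda>C. \<Sum>j\<in>insert i I. c j * f j C) = cl_add (cl_scale (c i) (f i)) (\<lambda>C. \<Sum>j\<in>I. c j * f j C)"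
    using insert by (simp add: cl_add_def cl_scale_def)
  show ?case unfolding e using insert
    by (simp add: rho_add good_scale good_sum rho_scale)
qed


definition JJ :: "nat \<Rightarrow> nat \<Rightarrow> 'w \<Rightarrow> 'w" where
  "JJ a b = \<rho> (mul (ev a) (ev b))"

lemma JJ_lin: "a < p+q \<Longrightarrow> b < p+q \<Longrightarrow> linear (JJ a b)"
  unfolding JJ_def by (rule rho_lin[OF good_pair])

lemma JJ_anti: "a < p+q \<Longrightarrow> b < p+q \<Longrightarrow> a \<noteq> b \<Longrightarrow> JJ b a w = - JJ a b w"
  unfolding JJ_def by (simp add: ev_anti[of a p q b] rho_scale good_pair)

lemma JJ_sq: "a < p+q \<Longrightarrow> JJ a a w = (- metric p a) *\<^sub>R w"
  unfolding JJ_def by (simp add: ev_sq rho_scale good_one rho_one)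

lemma JJ_comp1:
  assumes "a < p+q" "b < p+q" "c < p+q"
  shows "JJ a c w = (- metric p b) *\<^sub>R JJ a b (JJ b c w)"
proof -
  have "JJ a b (JJ b c w) = (- metric p b) *\<^sub>R JJ a c w"
    unfolding JJ_def using assms
    by (simp add: rho_mult[symmetric] good_pair pair_comp1 rho_scale)
  thus ?thesis by (simp add: metric_sq)
qed

lemma JJ_comp2:
  assumes "a < p+q" "b < p+q" "c < p+q" "a \<noteq> b" "b \<noteq> c" "a \<noteq> c"
  shows "JJ b c (JJ a b w) = metric p b *\<^sub>R JJ a c w"
  unfolding JJ_def using assms
  by (simp add: rho_mult[symmetric] good_pair pair_comp2 rho_scale)

end

context CS
begin

context
  fixes Pm assumes Pm: "Pm \<in> equiv_maps p q \<rho>"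
begin

lemma Pm_props:
  "(\<forall>i. bilinear (\<lambda>s t. Pm s t i)) \<and>
     (\<forall>s t. Pm s t = (\<lambda>i. - Pm t s i)) \<and>
     (\<forall>s t. in_V (p+q) (Pm s t)) \<and>
     (\<forall>x y s t. in_V (p+q) x \<and> in_V (p+q) y \<longrightarrow>
        (\<lambda>i. Pm (\<rho> (spin_elem p q x y) s) t i + Pm s (\<rho> (spin_elem p q x y) t) i)
          = wedge_act p q x y (Pm s t))"
  using Pm unfolding equiv_maps_def by (rule CollectD)


lemma Pm_bil: "bilinear (\<lambda>s t. Pm s t i)"
  using Pm_props by blast

lemma Pm_skew: "Pm s t i = - Pm t s i"
proof -
  have "Pm s t = (\<lambda>i. - Pm t s i)" using Pm_props by blast
  thus ?thesis by (rule fun_cong[THEN trans]) simp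
qed

lemma Pm_inV: "i \<ge> p+q \<Longrightarrow> Pm s t i = 0"
proof -
  assume "i \<ge> p+q"
  moreover have "in_V (p+q) (Pm s t)" using Pm_props by blast
  ultimately show ?thesis by (simp add: in_V_def)
qed

lemma Pm_eqv: "\<forall>x y s t. in_V (p+q) x \<and> in_V (p+q) y \<longrightarrow>
        (\<lambda>i. Pm (\<rho> (spin_elem p q x y) s) t i + Pm s (\<rho> (spin_elem p q x y) t) i)
          = wedge_act p q x y (Pm s t)"
  using Pm_props by blast

lemma Pm_lscale: "Pm (c *\<^sub>R x) y i = c * Pm x y i"
  using bilinear_lmul[OF Pm_bil] by simp
lemma Pm_rscale: "Pm x (c *\<^sub>R y) i = c * Pm x y i"
  using bilinear_rmul[OF Pm_bil] by simp
lemma Pm_ladd: "Pm (x + z) y i = Pm x y i + Pm z y i"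
  using bilinear_ladd[OF Pm_bil] by simp
lemma Pm_radd: "Pm x (y + z) i = Pm x y i + Pm x z i"
  using bilinear_radd[OF Pm_bil] by simp
lemma Pm_lneg: "Pm (- x) y i = - Pm x y i"
  using bilinear_lneg[OF Pm_bil] by simp
lemma Pm_rneg: "Pm x (- y) i = - Pm x y i"
  using bilinear_rneg[OF Pm_bil] by simp


lemma eqv:
  assumes "a < p+q" "b < p+q" "a \<noteq> b"
  shows "Pm (JJ a b u) v z + Pm u (JJ a b v) z
       = -2 * ((if z = a then metric p b * Pm u v b else 0) - (if z = b then metric p a * Pm u v a else 0))"
proof -
  have iv: "in_V (p+q) (unit_vec a)" "in_V (p+q) (unit_vec b)"
    using assms by (auto simp: in_V_def unit_vec_def)
  have "(\<lambda>i. Pm (\<rho> (spin_elem p q (unit_vec a) (unit_vec b)) u) v i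
      + Pm u (\<rho> (spin_elem p q (unit_vec a) (unit_vec b)) v) i)
      = wedge_act p q (unit_vec a) (unit_vec b) (Pm u v)" (is "?F = ?G")
    using Pm_eqv iv by blast
  have A: "Pm (\<rho> (spin_elem p q (unit_vec a) (unit_vec b)) u) v z
      + Pm u (\<rho> (spin_elem p q (unit_vec a) (unit_vec b)) v) z
      = wedge_act p q (unit_vec a) (unit_vec b) (Pm u v) z"
    using fun_cong[OF \<open>?F = ?G\<close>, of z] by simp
  have B: "\<rho> (spin_elem p q (unit_vec a) (unit_vec b)) w = (-1/2) *\<^sub>R JJ a b w" for w
    using assms by (simp add: spin_elem_unit rho_scale good_pair JJ_def)
  have W: "wedge_act p q (unit_vec a) (unit_vec b) (Pm u v) z
      = (if z = a then metric p b * Pm u v b else 0) - (if z = b then metric p a * Pm u v a else 0)"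
    using assms by (simp add: wedge_act_def vinner_unit) (simp add: unit_vec_def)
  have "Pm ((-1/2) *\<^sub>R JJ a b u) v z + Pm u ((-1/2) *\<^sub>R JJ a b v) z
      = (if z = a then metric p b * Pm u v b else 0) - (if z = b then metric p a * Pm u v a else 0)"
    using A unfolding B W .
  hence "(-1/2) * Pm (JJ a b u) v z + (-1/2) * Pm u (JJ a b v) z
      = (if z = a then metric p b * Pm u v b else 0) - (if z = b then metric p a * Pm u v a else 0)"
    by (simp only: Pm_lscale Pm_rscale)
  thus ?thesis by (cases "z = a"; cases "z = b") (simp_all add: field_simps)
qed

end

end

abbreviation Bj :: "nat \<Rightarrow> cl" where "Bj j \<equiv> cl_blade {1..<2*j+1}"

lemma ev_comm_notin:
  assumes "A \<subseteq> {0..<p+q}" "x < p+q" "x \<notin> A" "even (card A)"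
  shows "cl_mult p q (ev x) (cl_blade A) = cl_mult p q (cl_blade A) (ev x)"
  using ev_blade_comm[OF assms(1,2)] assms(3,4) by (simp add: cl_scale_one)

lemma ev_comm_in:
  assumes "A \<subseteq> {0..<p+q}" "x < p+q" "x \<in> A" "even (card A)"
  shows "cl_mult p q (ev x) (cl_blade A) = cl_scale (-1) (cl_mult p q (cl_blade A) (ev x))"
proof -
  have "finite A" using assms(1) finite_subset by blast
  hence "card (A - {x}) = card A - 1" using assms(3) by simp
  moreover have "card A \<ge> 1" using assms(3) \<open>finite A\<close> by (metis One_nat_def Suc_leI card_gt_0_iff empty_iff)
  ultimately have "odd (card (A - {x}))" using assms(4) by simp
  thus ?thesis using ev_blade_comm[OF assms(1,2)] by simp
qed

lemma pair_comm_blade: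
  assumes "A \<subseteq> {0..<p+q}" "x < p+q" "y < p+q" "even (card A)"
    and "(x \<in> A) = (y \<in> A)"
  shows "cl_mult p q (cl_mult p q (ev x) (ev y)) (cl_blade A) = cl_mult p q (cl_blade A) (cl_mult p q (ev x) (ev y))"
proof -
  let ?m = "cl_mult p q"
  define s where "s = (if x \<in> A then -1 else (1::real))"
  have cx: "?m (ev x) (cl_blade A) = cl_scale s (?m (cl_blade A) (ev x))"
    using assms ev_comm_in ev_comm_notin unfolding s_def by (auto simp: cl_scale_one)
  have cy: "?m (ev y) (cl_blade A) = cl_scale s (?m (cl_blade A) (ev y))"
    using assms ev_comm_in ev_comm_notin unfolding s_def by (auto simp: cl_scale_one)
  have ss: "s * s = 1" by (simp add: s_def)
  have "?m (?m (ev x) (ev y)) (cl_blade A) = ?m (ev x) (?m (ev y) (cl_blade A))"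
    by (rule cl_mult_assoc)
  also have "\<dots> = cl_scale s (?m (?m (ev x) (cl_blade A)) (ev y))"
    unfolding cy by (simp add: cl_mult_scale_right cl_mult_assoc)
  also have "\<dots> = cl_scale (s * s) (?m (?m (cl_blade A) (ev x)) (ev y))"
    unfolding cx by (simp add: cl_mult_scale_left cl_scale_scale)
  also have "\<dots> = ?m (cl_blade A) (?m (ev x) (ev y))"
    unfolding ss by (simp add: cl_scale_one cl_mult_assoc)
  finally show ?thesis .
qed

lemma pair_anticomm_blade:
  assumes "A \<subseteq> {0..<p+q}" "x < p+q" "y < p+q" "even (card A)"
    and "(x \<in> A) \<noteq> (y \<in> A)"
  shows "cl_mult p q (cl_mult p q (ev x) (ev y)) (cl_blade A) = cl_scale (-1) (cl_mult p q (cl_blade A) (cl_mult p q (ev x) (ev y)))"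
proof -
  let ?m = "cl_mult p q"
  define s where "s = (if x \<in> A then -1 else (1::real))"
  define s' where "s' = (if y \<in> A then -1 else (1::real))"
  have cx: "?m (ev x) (cl_blade A) = cl_scale s (?m (cl_blade A) (ev x))"
    using assms ev_comm_in ev_comm_notin unfolding s_def by (auto simp: cl_scale_one)
  have cy: "?m (ev y) (cl_blade A) = cl_scale s' (?m (cl_blade A) (ev y))"
    using assms ev_comm_in ev_comm_notin unfolding s'_def by (auto simp: cl_scale_one)
  have ss: "s' * s = -1" using assms(5) by (simp add: s_def s'_def)
  have "?m (?m (ev x) (ev y)) (cl_blade A) = ?m (ev x) (?m (ev y) (cl_blade A))"
    by (rule cl_mult_assoc)
  also have "\<dots> = cl_scale s' (?m (?m (ev x) (cl_blade A)) (ev y))"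
    unfolding cy by (simp add: cl_mult_scale_right cl_mult_assoc)
  also have "\<dots> = cl_scale (s' * s) (?m (?m (cl_blade A) (ev x)) (ev y))"
    unfolding cx by (simp add: cl_mult_scale_left cl_scale_scale)
  also have "\<dots> = cl_scale (-1) (?m (cl_blade A) (?m (ev x) (ev y)))"
    unfolding ss by (simp add: cl_mult_assoc)
  finally show ?thesis .
qed

lemma pair_blade:
  assumes "x < y" "y < p+q"
  shows "cl_mult p q (ev x) (ev y) = cl_blade {x, y}"
  using blade_insert[of "{y}" p q x] assms by simp

lemma Bj_Suc:
  assumes "2*j+2 < p+q"
  shows "Bj (Suc j) = cl_mult p q (Bj j) (cl_mult p q (ev (2*j+1)) (ev (2*j+2)))"
proof -
  have sub: "{1..<2*j+1} \<subseteq> {0..<p+q}" "{2*j+1, 2*j+2} \<subseteq> {0..<p+q}" using assms by auto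
  have "TT {1..<2*j+1} {2*j+1, 2*j+2} = 1"
    unfolding TT_def by (intro prod.neutral ballI) (auto simp: tau_def)
  moreover have "{1..<2*j+1} \<inter> {2*j+1, 2*j+2} = {}" by auto
  ultimately have "blade_sign p {1..<2*j+1} {2*j+1, 2*j+2} = 1"
    by (simp add: blade_sign_TF FF_def)
  moreover have "sd {1..<2*j+1} {2*j+1, 2*j+2} = {1..<2 * Suc j + 1}" by auto
  moreover have "cl_mult p q (ev (2*j+1)) (ev (2*j+2)) = cl_blade {2*j+1, 2*j+2}"
    using assms by (intro pair_blade) auto
  ultimately show ?thesis
    using sub by (simp only: blade_mult cl_scale_one)
qed

context CS
begin

lemma good_Bj: "2*j < p+q \<Longrightarrow> good (Bj j)"
  by (rule good_blade) auto

lemma rho_Bj_Suc: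
  assumes a: "2*j+2 < p+q"
  shows "\<rho> (Bj (Suc j)) w = \<rho> (Bj j) (JJ (2*j+1) (2*j+2) w)"
proof -
  have g: "good (Bj j)" "good (mul (ev (2*j+1)) (ev (2*j+2)))"
    by (rule good_Bj, use a in simp) (rule good_pair, use a in simp_all)
  have "\<rho> (Bj (Suc j)) w = \<rho> (mul (Bj j) (mul (ev (2*j+1)) (ev (2*j+2)))) w"
    by (simp only: Bj_Suc[OF a])
  thus ?thesis unfolding JJ_def using rho_mult[OF g] by simp
qed

lemma JJ_Bj_comm: "2*j+2 < p+q \<Longrightarrow> JJ (2*j+1) (2*j+2) (\<rho> (Bj j) w) = \<rho> (Bj j) (JJ (2*j+1) (2*j+2) w)"
proof -
  assume a: "2*j+2 < p+q"
  have "mul (mul (ev (2*j+1)) (ev (2*j+2))) (Bj j) = mul (Bj j) (mul (ev (2*j+1)) (ev (2*j+2)))"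
    using a by (intro pair_comm_blade) auto
  moreover have g: "good (Bj j)" "good (mul (ev (2*j+1)) (ev (2*j+2)))"
    by (rule good_Bj, use a in simp) (rule good_pair, use a in simp_all)
  ultimately show ?thesis unfolding JJ_def
    using rho_mult[OF g, of w] rho_mult[OF g(2,1), of w] by simp
qed

context
  fixes Pm assumes Pm: "Pm \<in> equiv_maps p q \<rho>"
begin

lemma eqv0:
  assumes "a < p+q" "b < p+q" "a \<noteq> b" "c \<noteq> a" "c \<noteq> b"
  shows "Pm (JJ a b u) v c = - Pm u (JJ a b v) c"
  using eqv[OF Pm assms(1-3), of u v c] assms(4,5) by simp

lemma Kl:
  assumes "a < p+q" "b < p+q" "c < p+q" "a \<noteq> b" "b \<noteq> c" "a \<noteq> c"
  shows "Pm (JJ b c u) v b = - metric p c * Pm u v c"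
proof -
  let ?X = "Pm (JJ a b (JJ b c u)) v a"
  let ?Y = "Pm (JJ b c u) (JJ a b v) a"
  let ?Z = "Pm u (JJ a c v) a"
  let ?G = "Pm (JJ b c u) v b"
  let ?H = "Pm u v c"
  have e1: "?X + ?Y = -2 * (metric p b * ?G)"
    using eqv[OF Pm assms(1,2,4), of "JJ b c u" v a] assms by simp
  have e2: "?Y + Pm u (JJ b c (JJ a b v)) a = 0"
    using eqv[OF Pm assms(2,3,5), of u "JJ a b v" a] assms by simp
  have e3: "Pm (JJ a c u) v a + ?Z = -2 * (metric p c * ?H)"
    using eqv[OF Pm assms(1,3,6), of u v a] assms by simp
  have c1: "Pm (JJ a c u) v a = - metric p b * ?X"
    using JJ_comp1[OF assms(1-3), of u] by (simp add: Pm_lscale[OF Pm] Pm_lneg[OF Pm])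
  have c2: "Pm u (JJ b c (JJ a b v)) a = metric p b * ?Z"
    using JJ_comp2[OF assms, of v] by (simp add: Pm_rscale[OF Pm])
  from metric_cases[of p b] show ?thesis
  proof
    assume "metric p b = 1"
    thus ?thesis using e1 e2 e3 c1 c2 by (simp only: mult_1 mult_minus1 minus_minus; linarith)
  next
    assume "metric p b = -1"
    thus ?thesis using e1 e2 e3 c1 c2 by (simp only: mult_1 mult_minus1 minus_minus; linarith)
  qed
qed

lemma move:
  assumes "2*j < p+q" "c \<notin> {1..<2*j+1}"
  shows "Pm (\<rho> (Bj j) u) v c = (-1)^j * Pm u (\<rho> (Bj j) v) c"
  using assms
proof (induction j arbitrary: u v)
  case 0
  then show ?case by (simp add: cl_blade_empty rho_one)
next
  case (Suc j)
  have a: "2*j+2 < p+q" using Suc.prems by simp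
  have c: "c \<noteq> 2*j+1" "c \<noteq> 2*j+2" "c \<notin> {1..<2*j+1}" using Suc.prems by auto
  have "Pm (\<rho> (Bj (Suc j)) u) v c = Pm (\<rho> (Bj j) (JJ (2*j+1) (2*j+2) u)) v c"
    using rho_Bj_Suc[OF a] by simp
  also have "\<dots> = (-1)^j * Pm (JJ (2*j+1) (2*j+2) u) (\<rho> (Bj j) v) c"
    using Suc.IH[of "JJ (2*j+1) (2*j+2) u" v] a c by simp
  also have "\<dots> = (-1)^j * (- Pm u (JJ (2*j+1) (2*j+2) (\<rho> (Bj j) v)) c)"
    using eqv0[of "2*j+1" "2*j+2" c u "\<rho> (Bj j) v"] a c by simp
  also have "\<dots> = (-1)^(Suc j) * Pm u (\<rho> (Bj (Suc j)) v) c"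
    using JJ_Bj_comm[OF a] rho_Bj_Suc[OF a] by simp
  finally show ?case .
qed

end

end

lemma sym_double_sum:
  fixes F :: "nat \<Rightarrow> nat \<Rightarrow> 'a::real_vector"
  assumes "finite K" "\<And>k l. k \<in> K \<Longrightarrow> l \<in> K \<Longrightarrow> k \<noteq> l \<Longrightarrow> F l k = - F k l"
  shows "(\<Sum>k\<in>K. \<Sum>l\<in>K. F k l) = (\<Sum>k\<in>K. F k k)"
proof -
  let ?S = "\<Sum>k\<in>K. \<Sum>l\<in>K. F k l"
  have sw: "(\<Sum>k\<in>K. \<Sum>l\<in>K. F l k) = ?S" by (rule sum.swap)
  have "(\<Sum>k\<in>K. \<Sum>l\<in>K. F k l + F l k) = (\<Sum>k\<in>K. (\<Sum>l\<in>K. F k l) + (\<Sum>l\<in>K. F l k))"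
    by (intro sum.cong refl sum.distrib)
  also have "\<dots> = ?S + (\<Sum>k\<in>K. \<Sum>l\<in>K. F l k)"
    by (rule sum.distrib)
  finally have A: "(\<Sum>k\<in>K. \<Sum>l\<in>K. F k l + F l k) = ?S + ?S" unfolding sw .
  have "(\<Sum>k\<in>K. \<Sum>l\<in>K. F k l + F l k) = (\<Sum>k\<in>K. \<Sum>l\<in>K. if l = k then F k k + F k k else 0)"
  proof (intro sum.cong refl)
    fix k l assume kl: "k \<in> K" "l \<in> K"
    show "F k l + F l k = (if l = k then F k k + F k k else 0)"
    proof (cases "l = k")
      case False
      hence "F l k = - F k l" using assms(2)[OF kl] by auto
      thus ?thesis using False by simp
    qed simp
  qed
  also have "\<dots> = (\<Sum>k\<in>K. F k k + F k k)"
    using assms(1) by (intro sum.cong refl) (simp add: sum.delta)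
  also have "\<dots> = (\<Sum>k\<in>K. F k k) + (\<Sum>k\<in>K. F k k)"
    by (rule sum.distrib)
  finally have "?S + ?S = (\<Sum>k\<in>K. F k k) + (\<Sum>k\<in>K. F k k)" unfolding A .
  hence "2 *\<^sub>R ?S = 2 *\<^sub>R (\<Sum>k\<in>K. F k k)" by (simp only: scaleR_2)
  thus ?thesis by simp
qed

lemma blade_P_split:
  assumes "1 \<le> p'" "p' \<le> p+q"
  shows "cl_blade {0..<p'} = cl_mult p q (ev 0) (cl_blade {1..<p'})"
proof -
  have "insert 0 {1..<p'} = {0..<p'}" using assms by auto
  moreover have "0 < p+q" using assms by linarith
  ultimately show ?thesis using blade_insert[of "{1..<p'}" p q 0] assms by auto
qed

lemma GG_alg:
  assumes "1 \<le> p'" "p' \<le> k" "k < p+q" "even (card {1..<p'})"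
  shows "cl_mult p q (cl_blade {0..<p'}) (ev k) = cl_mult p q (cl_mult p q (ev 0) (ev k)) (cl_blade {1..<p'})"
proof -
  have sub: "{1..<p'} \<subseteq> {0..<p+q}" using assms by auto
  have "cl_mult p q (cl_blade {1..<p'}) (ev k) = cl_mult p q (ev k) (cl_blade {1..<p'})"
    using ev_comm_notin[OF sub assms(3) _ assms(4)] assms by auto
  have "cl_mult p q (cl_blade {0..<p'}) (ev k) = cl_mult p q (cl_mult p q (ev 0) (cl_blade {1..<p'})) (ev k)"
    using blade_P_split[OF assms(1), of p q] assms by simp
  also have "\<dots> = cl_mult p q (ev 0) (cl_mult p q (cl_blade {1..<p'}) (ev k))"
    by (rule cl_mult_assoc)
  also have "\<dots> = cl_mult p q (ev 0) (cl_mult p q (ev k) (cl_blade {1..<p'}))"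
    unfolding \<open>cl_mult p q (cl_blade {1..<p'}) (ev k) = _\<close> ..
  also have "\<dots> = cl_mult p q (cl_mult p q (ev 0) (ev k)) (cl_blade {1..<p'})"
    by (rule cl_mult_assoc[symmetric])
  finally show ?thesis .
qed

context CS
begin

definition mm :: nat where "mm = p' div 2"
definition LL :: "'w \<Rightarrow> 'w" where "LL = \<rho> (cl_blade {1..<p'})"

lemma p'_ge3: "p' \<ge> 3" using p'mod by presburger
lemma p'_odd: "p' = 2 * mm + 1" unfolding mm_def using p'mod by presburger
lemma mm_odd: "odd mm" unfolding mm_def using p'mod by presburger
lemma p'_le: "p' \<le> p" using pp by simp
lemma p'_le_n: "p' \<le> p + q" using pp by simp
lemma p_pos: "0 < p" using p'_ge3 p'_le by simp
lemma metric0: "metric p 0 = 1" using p_pos by (simp add: metric_def)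
lemma metric_P: "i < p' \<Longrightarrow> metric p i = 1" using p'_le by (simp add: metric_def)
lemma B_Bj: "cl_blade {1..<p'} = Bj mm" by (subst p'_odd) simp
lemma two_mm: "2 * mm < p + q" using p'_le_n p'mod unfolding mm_def by presburger

lemma good_B: "good (cl_blade {1..<p'})"
  unfolding B_Bj by (rule good_Bj[OF two_mm])

lemma LL_lin: "linear LL"
  unfolding LL_def by (rule rho_lin[OF good_B])

lemma JJ_comp1':
  assumes "a < p+q" "b < p+q" "c < p+q"
  shows "JJ a b (JJ b c w) = (- metric p b) *\<^sub>R JJ a c w"
  unfolding JJ_def using assms
  by (simp add: rho_mult[symmetric] good_pair pair_comp1 rho_scale)

lemma JJ_JJ_same:
  assumes "x < p+q" "y < p+q" "x \<noteq> y"
  shows "JJ x y (JJ x y w) = (- (metric p x * metric p y)) *\<^sub>R w"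
proof -
  have "JJ x y (JJ y x w) = (- metric p y) *\<^sub>R JJ x x w"
    using JJ_comp1'[OF assms(1,2,1)] .
  moreover have "JJ y x w = - JJ x y w" using JJ_anti[of x y w] assms by simp
  moreover have "JJ x y (- JJ x y w) = - JJ x y (JJ x y w)"
    using linear_neg[OF JJ_lin[OF assms(1,2)]] .
  ultimately have "- JJ x y (JJ x y w) = (metric p y * metric p x) *\<^sub>R w"
    using assms by (simp add: JJ_sq metric_sq)
  hence "JJ x y (JJ x y w) = - ((metric p y * metric p x) *\<^sub>R w)" by (metis minus_minus)
  thus ?thesis by (simp add: mult.commute)
qed

lemma Bj_sq:
  assumes "2 * j < p'"
  shows "\<rho> (Bj j) (\<rho> (Bj j) w) = (-1)^j *\<^sub>R w"
  using assms
proof (induction j arbitrary: w)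
  case 0
  then show ?case by (simp add: cl_blade_empty rho_one)
next
  case (Suc j)
  have a: "2*j+2 < p+q" using Suc.prems p'_le_n by simp
  have lin: "linear (\<rho> (Bj j))" by (rule rho_lin, rule good_Bj) (use a in simp)
  have "\<rho> (Bj (Suc j)) (\<rho> (Bj (Suc j)) w)
      = \<rho> (Bj j) (JJ (2*j+1) (2*j+2) (\<rho> (Bj j) (JJ (2*j+1) (2*j+2) w)))"
    by (simp only: rho_Bj_Suc[OF a])
  also have "\<dots> = \<rho> (Bj j) (\<rho> (Bj j) (JJ (2*j+1) (2*j+2) (JJ (2*j+1) (2*j+2) w)))"
    by (simp only: JJ_Bj_comm[OF a])
  also have "JJ (2*j+1) (2*j+2) (JJ (2*j+1) (2*j+2) w) = - w"
    using JJ_JJ_same[of "2*j+1" "2*j+2" w] a Suc.prems by (simp add: metric_P)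
  also have "\<rho> (Bj j) (\<rho> (Bj j) (- w)) = (-1)^j *\<^sub>R (- w)"
    using Suc.IH Suc.prems by simp
  finally show ?case by simp
qed

lemma LL_sq: "LL (LL w) = - w"
proof -
  have "2 * mm < p'" unfolding mm_def using p'mod by presburger
  thus ?thesis unfolding LL_def B_Bj using Bj_sq[of mm w] mm_odd by simp
qed

definition bb :: "('w \<Rightarrow> 'w \<Rightarrow> vec) \<Rightarrow> 'w \<Rightarrow> 'w \<Rightarrow> real" where
  "bb Pm s t = Pm (LL s) t 0"

lemma b_form_bb: "b_form p q p' \<rho> Pm = bb Pm"
  unfolding b_form_def bb_def LL_def using p'_le_n p_pos
  by (intro ext) (simp add: vinner_unit metric0)

lemma in_Q: "x \<in> {1..<p'} \<longleftrightarrow> (x \<noteq> 0 \<and> x < p')" by auto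

lemma JJ_LL:
  assumes "a < p+q" "b < p+q"
  shows "JJ a b (LL w) = (if (a \<in> {1..<p'}) = (b \<in> {1..<p'}) then 1 else -1) *\<^sub>R LL (JJ a b w)"
proof -
  have g: "good (cl_blade {1..<p'})" "good (mul (ev a) (ev b))"
    using good_B good_pair assms by auto
  have sub: "{1..<p'} \<subseteq> {0..<p+q}" using p'_le_n by auto
  have ev: "even (card {1..<p'})" using p'mod by simp presburger
  show ?thesis
  proof (cases "(a \<in> {1..<p'}) = (b \<in> {1..<p'})")
    case True
    have "mul (mul (ev a) (ev b)) (cl_blade {1..<p'}) = mul (cl_blade {1..<p'}) (mul (ev a) (ev b))"
      using pair_comm_blade[OF sub assms ev True] .
    hence "\<rho> (mul (ev a) (ev b)) (\<rho> (cl_blade {1..<p'}) w) = \<rho> (cl_blade {1..<p'}) (\<rho> (mul (ev a) (ev b)) w)"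
      using rho_mult[OF g, of w] rho_mult[OF g(2,1), of w] by metis
    thus ?thesis unfolding JJ_def LL_def by (subst if_P[OF True]) simp
  next
    case False
    have "mul (mul (ev a) (ev b)) (cl_blade {1..<p'}) = cl_scale (-1) (mul (cl_blade {1..<p'}) (mul (ev a) (ev b)))"
      using pair_anticomm_blade[OF sub assms ev False] .
    hence "\<rho> (mul (ev a) (ev b)) (\<rho> (cl_blade {1..<p'}) w) = (-1) *\<^sub>R \<rho> (cl_blade {1..<p'}) (\<rho> (mul (ev a) (ev b)) w)"
      using rho_mult[OF g, of w] rho_mult[OF g(2,1), of w] rho_scale[OF good_mult[OF g(1,2)], of "-1" w] by metis
    thus ?thesis unfolding JJ_def LL_def by (subst if_not_P[OF False]) simp
  qed
qed

context
  fixes Pm assumes Pm: "Pm \<in> equiv_maps p q \<rho>"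
begin

lemma bb_sym: "bb Pm s t = bb Pm t s"
proof -
  have "Pm (LL s) t 0 = (-1)^mm * Pm s (LL t) 0"
    unfolding LL_def B_Bj by (rule move[OF Pm two_mm]) simp
  also have "\<dots> = - Pm s (LL t) 0" using mm_odd by simp
  also have "\<dots> = Pm (LL t) s 0" using Pm_skew[OF Pm, of "LL t" s 0] by simp
  finally show ?thesis unfolding bb_def .
qed

lemma bb_lin1: "linear (\<lambda>s. bb Pm s t)"
proof -
  have "linear (\<lambda>s. Pm s t 0)" using Pm_bil[OF Pm] by (simp add: bilinear_def)
  hence "linear ((\<lambda>s. Pm s t 0) \<circ> LL)" using LL_lin linear_compose by blast
  thus ?thesis unfolding bb_def comp_def .
qed

lemma bb_lin2: "linear (\<lambda>t. bb Pm s t)"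
  using Pm_bil[OF Pm] unfolding bb_def by (simp add: bilinear_def)

lemma bb_bil: "bilinear (bb Pm)"
  using bb_lin1 bb_lin2 by (simp add: bilinear_def)

lemma third_index: "\<exists>a. a < p+q \<and> a \<noteq> 0 \<and> a \<noteq> b"
proof (cases "b = 1")
  case True
  thus ?thesis using p'_ge3 p'_le_n by (intro exI[of _ 2]) auto
next
  case False
  thus ?thesis using p'_ge3 p'_le_n by (intro exI[of _ 1]) auto
qed

lemma K0:
  assumes "b < p+q" "b \<noteq> 0"
  shows "Pm (JJ 0 b u) v 0 = - metric p b * Pm u v b"
proof -
  obtain a where a: "a < p+q" "a \<noteq> 0" "a \<noteq> b"
    using third_index by blast
  show ?thesis by (rule Kl[OF Pm a(1)]) (use a assms p_pos p'_le_n in auto)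
qed

lemma Kb:
  assumes "b < p+q" "b \<noteq> 0"
  shows "Pm (JJ 0 b u) v b = Pm u v 0"
proof -
  obtain a where a: "a < p+q" "a \<noteq> 0" "a \<noteq> b"
    using third_index by blast
  have "Pm (JJ b 0 u) v b = - metric p 0 * Pm u v 0"
    by (rule Kl[OF Pm a(1)]) (use a assms p_pos p'_le_n in auto)
  moreover have "JJ b 0 u = - JJ 0 b u" using JJ_anti[of 0 b u] assms p_pos p'_le_n by auto
  ultimately show ?thesis by (simp add: Pm_lneg[OF Pm] metric0)
qed

lemma bb_neg2: "bb Pm s (- t) = - bb Pm s t"
  using linear_neg[OF bb_lin2] .
lemma bb_neg1: "bb Pm (- s) t = - bb Pm s t"
  using linear_neg[OF bb_lin1] .
lemma bb_add2: "bb Pm s (t + t') = bb Pm s t + bb Pm s t'"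
  using linear_add[OF bb_lin2] .
lemma bb_scale2: "bb Pm s (c *\<^sub>R t) = c * bb Pm s t"
  using linear_scale[OF bb_lin2] by simp
lemma bb_scale1: "bb Pm (c *\<^sub>R s) t = c * bb Pm s t"
  using linear_scale[OF bb_lin1] by simp
lemma bb_sum1: "bb Pm (\<Sum>k\<in>K. f k) t = (\<Sum>k\<in>K. bb Pm (f k) t)"
  using linear_sum[OF bb_lin1] by simp
lemma bb_sum2: "bb Pm s (\<Sum>k\<in>K. f k) = (\<Sum>k\<in>K. bb Pm s (f k))"
  using linear_sum[OF bb_lin2] by simp

lemma inv_from_skew:
  assumes sk: "\<And>s t. bb Pm (T s) t + bb Pm s (T t) = \<kappa> * bb Pm s t"
    and sq: "\<And>w. T (T w) = - w + \<kappa> *\<^sub>R T w"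
  shows "bb Pm (T s) (T t) = bb Pm s t"
proof -
  have "bb Pm (T s) (T t) = \<kappa> * bb Pm s (T t) - bb Pm s (T (T t))"
    using sk[of s "T t"] by simp
  also have "bb Pm s (T (T t)) = - bb Pm s t + \<kappa> * bb Pm s (T t)"
    unfolding sq by (simp only: bb_add2 bb_neg2 bb_scale2)
  finally show ?thesis by simp
qed

lemma skew0:
  assumes "b < p'" "b \<noteq> 0"
  shows "bb Pm (JJ 0 b s) t + bb Pm s (JJ 0 b t) = 0"
proof -
  have bn: "b < p+q" using assms p'_le_n by simp
  have n0: "0 < p+q" using p'_le_n p'_ge3 by linarith
  have c: "JJ 0 b (LL w) = - LL (JJ 0 b w)" for w
    using JJ_LL[OF n0 bn, of w] assms by simp
  have L: "LL (JJ 0 b s) = - JJ 0 b (LL s)" using c[of s] by simp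
  have e: "Pm (JJ 0 b (LL s)) t 0 + Pm (LL s) (JJ 0 b t) 0 = -2 * Pm (LL s) t b"
    using eqv[OF Pm n0 bn, of "LL s" t 0] assms by (simp add: metric_P)
  have k: "Pm (JJ 0 b (LL s)) t 0 = - Pm (LL s) t b"
    using K0[OF bn assms(2), of "LL s" t] assms by (simp add: metric_P)
  show ?thesis unfolding bb_def L using e k by (simp add: Pm_lneg[OF Pm])
qed

lemma skew_JJ:
  assumes "a < p+q" "b < p+q" "a \<noteq> b" "(a < p') = (b < p')"
  shows "bb Pm (JJ a b s) t + bb Pm s (JJ a b t) = 0"
proof (cases "a = 0")
  case True
  thus ?thesis using skew0[of b s t] assms p'_ge3 by auto
next
  case a0: False
  show ?thesis
  proof (cases "b = 0")
    case True
    have "JJ a b w = - JJ 0 a w" for w using JJ_anti[of 0 a w] assms True by auto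
    moreover have "bb Pm (JJ 0 a s) t + bb Pm s (JJ 0 a t) = 0"
      using skew0[of a s t] assms True p'_ge3 a0 by auto
    ultimately show ?thesis by (simp add: bb_neg1 bb_neg2)
  next
    case b0: False
    have n0: "0 < p+q" using p'_le_n p'_ge3 by linarith
    have "(a \<in> {1..<p'}) = (b \<in> {1..<p'})" using assms a0 b0 by auto
    hence "LL (JJ a b s) = JJ a b (LL s)" using JJ_LL[OF assms(1,2), of s] by simp
    moreover have "Pm (JJ a b (LL s)) t 0 = - Pm (LL s) (JJ a b t) 0"
      using eqv0[OF Pm assms(1-3)] a0 b0 by auto
    ultimately show ?thesis unfolding bb_def by simp
  qed
qed

end

end

context CS
begin

lemma n_pos: "0 < p+q" using p'_le_n p'_ge3 by linarith

definition GG :: "nat \<Rightarrow> 'w \<Rightarrow> 'w" where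
  "GG k = \<rho> (mul (cl_blade {0..<p'}) (ev k))"

lemma good_GGe: "k < p+q \<Longrightarrow> good (mul (cl_blade {0..<p'}) (ev k))"
proof -
  assume k: "k < p+q"
  have h1: "\<And>A. cl_blade {0..<p'} A \<noteq> 0 \<Longrightarrow> even (card A) = False"
    using p'mod by (simp add: cl_blade_def split: if_splits) presburger
  have h2: "\<And>A. ev k A \<noteq> 0 \<Longrightarrow> even (card A) = False"
    by (simp add: cl_blade_def split: if_splits)
  have "even (card C)" if "mul (cl_blade {0..<p'}) (ev k) C \<noteq> 0" for C
    using cl_mult_parity[OF h1 h2 that] by simp
  thus ?thesis unfolding good_def cl_even_def by (simp add: in_cl_mult)
qed

lemma GG_lin: "k < p+q \<Longrightarrow> linear (GG k)"
  unfolding GG_def by (rule rho_lin[OF good_GGe])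

lemma GG_eq:
  assumes "p' \<le> k" "k < p+q"
  shows "GG k w = JJ 0 k (LL w)"
proof -
  have ev: "even (card {1..<p'})" using p'mod by simp presburger
  have "mul (cl_blade {0..<p'}) (ev k) = mul (mul (ev 0) (ev k)) (cl_blade {1..<p'})"
    using GG_alg[of p' k p q] assms p'_ge3 ev by simp
  moreover have "good (mul (ev 0) (ev k))" using good_pair[OF n_pos assms(2)] .
  ultimately show ?thesis unfolding GG_def JJ_def LL_def
    using rho_mult[OF _ good_B] by simp
qed

lemma JJ0k_LL:
  assumes "p' \<le> k" "k < p+q"
  shows "JJ 0 k (LL w) = LL (JJ 0 k w)"
  using JJ_LL[OF n_pos assms(2), of w] assms p'_ge3 by simp

lemma GG_GG:
  assumes "p' \<le> k" "k < p+q" "p' \<le> l" "l < p+q"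
  shows "GG k (GG l w) = - JJ k l w"
proof -
  have n0: "0 < p+q" by (rule n_pos)
  have "GG k (GG l w) = JJ 0 k (LL (JJ 0 l (LL w)))" using GG_eq assms by simp
  also have "\<dots> = JJ 0 k (JJ 0 l (LL (LL w)))" using JJ0k_LL[OF assms(3,4)] by simp
  also have "\<dots> = - JJ 0 k (JJ 0 l w)"
    using LL_sq linear_neg[OF JJ_lin[OF n0 assms(4)]] linear_neg[OF JJ_lin[OF n0 assms(2)]] by simp
  also have "JJ 0 k (JJ 0 l w) = - JJ k 0 (JJ 0 l w)"
    using JJ_anti[OF n_pos assms(2), of "JJ 0 l w"] assms p'_ge3 by simp
  also have "JJ k 0 (JJ 0 l w) = (- metric p 0) *\<^sub>R JJ k l w"
    using JJ_comp1'[OF assms(2) n_pos assms(4), of w] .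
  finally show ?thesis by (simp add: metric0)
qed

lemma iota_sq:
  assumes "(\<Sum>k\<in>{p..<p+q}. (x k)\<^sup>2) = 1"
  shows "(\<Sum>k\<in>{p..<p+q}. x k *\<^sub>R GG k (\<Sum>l\<in>{p..<p+q}. x l *\<^sub>R GG l w)) = - w"
proof -
  let ?K = "{p..<p+q}"
  have kP: "k \<in> ?K \<Longrightarrow> p' \<le> k \<and> k < p+q" for k using p'_le by auto
  have "(\<Sum>k\<in>?K. x k *\<^sub>R GG k (\<Sum>l\<in>?K. x l *\<^sub>R GG l w))
      = (\<Sum>k\<in>?K. \<Sum>l\<in>?K. (x k * x l) *\<^sub>R GG k (GG l w))"
  proof (intro sum.cong refl)
    fix k assume "k \<in> ?K"
    hence lin: "linear (GG k)" using GG_lin kP by blast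
    show "x k *\<^sub>R GG k (\<Sum>l\<in>?K. x l *\<^sub>R GG l w) = (\<Sum>l\<in>?K. (x k * x l) *\<^sub>R GG k (GG l w))"
      by (simp add: linear_sum[OF lin] linear_scale[OF lin] scaleR_sum_right)
  qed
  also have "\<dots> = - (\<Sum>k\<in>?K. \<Sum>l\<in>?K. (x k * x l) *\<^sub>R JJ k l w)"
    using kP by (simp add: GG_GG sum_negf)
  also have "(\<Sum>k\<in>?K. \<Sum>l\<in>?K. (x k * x l) *\<^sub>R JJ k l w) = (\<Sum>k\<in>?K. (x k * x k) *\<^sub>R JJ k k w)"
  proof (rule sym_double_sum)
    fix k l assume "k \<in> ?K" "l \<in> ?K" "k \<noteq> l"
    thus "(x l * x k) *\<^sub>R JJ l k w = - ((x k * x l) *\<^sub>R JJ k l w)"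
      using JJ_anti[of k l w] by (simp add: mult.commute)
  qed simp
  also have "\<dots> = (\<Sum>k\<in>?K. (x k)\<^sup>2 *\<^sub>R w)"
    by (intro sum.cong refl) (auto simp: JJ_sq metric_def power2_eq_square)
  also have "\<dots> = w" using assms by (simp add: scaleR_sum_left[symmetric])
  finally show ?thesis .
qed

context
  fixes Pm assumes Pm: "Pm \<in> equiv_maps p q \<rho>"
begin

lemma skew_GG:
  assumes "p' \<le> k" "k < p+q"
  shows "bb Pm (GG k s) t + bb Pm s (GG k t) = 0"
proof -
  have n0: "0 < p+q" by (rule n_pos)
  have k0: "k \<noteq> 0" using assms p'_ge3 by simp
  have A: "bb Pm (GG k s) t = metric p k * Pm s t k"
  proof -
    have "LL (GG k s) = - JJ 0 k s"
      using GG_eq[OF assms] JJ0k_LL[OF assms] LL_sq by simp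
    hence "bb Pm (GG k s) t = - Pm (JJ 0 k s) t 0" unfolding bb_def by (simp add: Pm_lneg[OF Pm])
    thus ?thesis using K0[OF Pm assms(2) k0] by (simp add: metric_sq)
  qed
  have B: "bb Pm s (GG k t) = - metric p k * Pm s t k"
  proof -
    have e: "Pm (JJ 0 k (LL s)) (LL t) 0 + Pm (LL s) (JJ 0 k (LL t)) 0 = -2 * (metric p k * Pm (LL s) (LL t) k)"
      using eqv[OF Pm n0 assms(2) k0[symmetric], of "LL s" "LL t" 0] k0 by simp
    have k: "Pm (JJ 0 k (LL s)) (LL t) 0 = - metric p k * Pm (LL s) (LL t) k"
      using K0[OF Pm assms(2) k0] .
    have mv: "Pm (LL s) (LL t) k = Pm s t k"
    proof -
      have "Pm (LL s) (LL t) k = (-1)^mm * Pm s (LL (LL t)) k"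
        unfolding LL_def B_Bj by (rule move[OF Pm two_mm]) (use assms p'_odd in auto)
      also have "\<dots> = Pm s t k" using mm_odd LL_sq by (simp add: Pm_rneg[OF Pm])
      finally show ?thesis .
    qed
    show ?thesis unfolding bb_def GG_eq[OF assms] using e k mv by simp
  qed
  show ?thesis using A B by simp
qed

lemma iota_skew:
  "bb Pm (\<Sum>k\<in>{p..<p+q}. x k *\<^sub>R GG k s) t + bb Pm s (\<Sum>k\<in>{p..<p+q}. x k *\<^sub>R GG k t) = 0"
proof -
  have "bb Pm (\<Sum>k\<in>{p..<p+q}. x k *\<^sub>R GG k s) t + bb Pm s (\<Sum>k\<in>{p..<p+q}. x k *\<^sub>R GG k t)
      = (\<Sum>k\<in>{p..<p+q}. x k * (bb Pm (GG k s) t + bb Pm s (GG k t)))"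
    by (simp add: bb_sum1[OF Pm] bb_sum2[OF Pm] bb_scale1[OF Pm] bb_scale2[OF Pm] sum.distrib distrib_left)
  also have "\<dots> = 0"
    using skew_GG p'_le by (intro sum.neutral) auto
  finally show ?thesis .
qed

end

end

lemma mul_lincomb_left:
  assumes "finite I"
  shows "cl_mult p q (\<lambda>C. \<Sum>i\<in>I. c i * f i C) y = (\<lambda>C. \<Sum>i\<in>I. c i * cl_mult p q (f i) y C)"
proof -
  have "cl_mult p q (\<lambda>C. \<Sum>i\<in>I. c i * f i C) y = cl_mult p q (\<lambda>C. \<Sum>i\<in>I. cl_scale (c i) (f i) C) y"
    by (simp add: cl_scale_def)
  also have "\<dots> = (\<lambda>C. \<Sum>i\<in>I. cl_mult p q (cl_scale (c i) (f i)) y C)"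
    by (rule cl_mult_sum_left[OF assms])
  finally show ?thesis by (simp only: cl_mult_scale_left) (simp add: cl_scale_def)
qed

lemma mul_lincomb_right:
  assumes "finite I"
  shows "cl_mult p q x (\<lambda>C. \<Sum>i\<in>I. c i * f i C) = (\<lambda>C. \<Sum>i\<in>I. c i * cl_mult p q x (f i) C)"
proof -
  have "cl_mult p q x (\<lambda>C. \<Sum>i\<in>I. c i * f i C) = cl_mult p q x (\<lambda>C. \<Sum>i\<in>I. cl_scale (c i) (f i) C)"
    by (simp add: cl_scale_def)
  also have "\<dots> = (\<lambda>C. \<Sum>i\<in>I. cl_mult p q x (cl_scale (c i) (f i)) C)"
    by (rule cl_mult_sum_right[OF assms])
  finally show ?thesis by (simp only: cl_mult_scale_right) (simp add: cl_scale_def)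
qed

lemma vec_mult_expand:
  "cl_mult p q (cl_vec (p+q) x) (cl_vec (p+q) y)
     = (\<lambda>C. \<Sum>a<p+q. x a * (\<Sum>b<p+q. y b * cl_mult p q (ev a) (ev b) C))"
  unfolding cl_vec_expand[of "p+q" x] cl_vec_expand[of "p+q" y]
  by (simp add: mul_lincomb_left mul_lincomb_right)

lemma ev_pair_sym:
  assumes "a < p+q" "b < p+q"
  shows "cl_mult p q (ev a) (ev b) C + cl_mult p q (ev b) (ev a) C
       = (if a = b then -2 * metric p a * cl_one C else 0)"
proof (cases "a = b")
  case True
  thus ?thesis using assms by (simp add: ev_sq cl_scale_def)
next
  case False
  thus ?thesis using ev_anti[OF assms False] by (simp add: cl_scale_def)
qed

lemma vec_anticomm:
  "cl_mult p q (cl_vec (p+q) x) (cl_vec (p+q) y) C + cl_mult p q (cl_vec (p+q) y) (cl_vec (p+q) x) C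
     = -2 * vinner p q x y * cl_one C"
proof -
  let ?E = "\<lambda>a b. cl_mult p q (ev a) (ev b) C"
  have "cl_mult p q (cl_vec (p+q) y) (cl_vec (p+q) x) C = (\<Sum>b<p+q. y b * (\<Sum>a<p+q. x a * ?E b a))"
    by (simp add: vec_mult_expand)
  also have "\<dots> = (\<Sum>b<p+q. \<Sum>a<p+q. x a * y b * ?E b a)"
    by (simp add: sum_distrib_left mult_ac)
  also have "\<dots> = (\<Sum>a<p+q. \<Sum>b<p+q. x a * y b * ?E b a)"
    by (rule sum.swap)
  finally have Y: "cl_mult p q (cl_vec (p+q) y) (cl_vec (p+q) x) C = \<dots>" .
  have X: "cl_mult p q (cl_vec (p+q) x) (cl_vec (p+q) y) C = (\<Sum>a<p+q. \<Sum>b<p+q. x a * y b * ?E a b)"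
    by (simp add: vec_mult_expand sum_distrib_left mult_ac)
  have "(\<Sum>a<p+q. \<Sum>b<p+q. x a * y b * ?E a b) + (\<Sum>a<p+q. \<Sum>b<p+q. x a * y b * ?E b a)
      = (\<Sum>a<p+q. \<Sum>b<p+q. x a * y b * (?E a b + ?E b a))"
    by (simp add: sum.distrib[symmetric] distrib_left)
  also have "\<dots> = (\<Sum>a<p+q. \<Sum>b<p+q. if b = a then x a * y a * (-2 * metric p a * cl_one C) else 0)"
    by (intro sum.cong refl) (simp add: ev_pair_sym)
  also have "\<dots> = (\<Sum>a<p+q. x a * y a * (-2 * metric p a * cl_one C))"
    by (intro sum.cong refl) (simp add: sum.delta)
  also have "\<dots> = -2 * vinner p q x y * cl_one C"
    unfolding vinner_def by (simp add: sum_distrib_left sum_distrib_right mult_ac)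
  finally show ?thesis using X Y by simp
qed

lemma vec_sq:
  assumes "vinner p q x x = 1"
  shows "cl_mult p q (cl_vec (p+q) x) (cl_vec (p+q) x) = cl_scale (-1) cl_one"
proof (rule ext)
  fix C show "cl_mult p q (cl_vec (p+q) x) (cl_vec (p+q) x) C = cl_scale (-1) cl_one C"
    using vec_anticomm[of p q x x C] assms by (simp add: cl_scale_def)
qed

lemma vec_swap:
  "cl_mult p q (cl_vec (p+q) y) (cl_vec (p+q) x)
    = cl_add (cl_scale (-1) (cl_mult p q (cl_vec (p+q) x) (cl_vec (p+q) y))) (cl_scale (-2 * vinner p q x y) cl_one)"
proof (rule ext)
  fix C show "cl_mult p q (cl_vec (p+q) y) (cl_vec (p+q) x) C
    = cl_add (cl_scale (-1) (cl_mult p q (cl_vec (p+q) x) (cl_vec (p+q) y))) (cl_scale (-2 * vinner p q x y) cl_one) C"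
    using vec_anticomm[of p q x y C] by (simp add: cl_scale_def cl_add_def; linarith)
qed

lemma in_cl_vec: "in_cl n (cl_vec n x)"
  by (auto simp: in_cl_def cl_vec_def split: if_splits)

lemma uvuv:
  assumes "vinner p q u u = 1" "vinner p q v v = 1"
  shows "cl_mult p q (cl_mult p q (cl_vec (p+q) u) (cl_vec (p+q) v)) (cl_mult p q (cl_vec (p+q) u) (cl_vec (p+q) v))
     = cl_add (cl_scale (-1) cl_one) (cl_scale (-2 * vinner p q u v) (cl_mult p q (cl_vec (p+q) u) (cl_vec (p+q) v)))"
proof -
  let ?m = "cl_mult p q"
  let ?U = "cl_vec (p+q) u" and ?V = "cl_vec (p+q) v"
  let ?c = "vinner p q u v"
  have "?m (?m ?U ?V) (?m ?U ?V) = ?m ?U (?m (?m ?V ?U) ?V)"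
    by (simp add: cl_mult_assoc)
  also have "?m (?m ?V ?U) ?V = cl_add (cl_scale (-1) (?m ?U (?m ?V ?V))) (cl_scale (-2 * ?c) ?V)"
    unfolding vec_swap[of p q v u]
    by (simp add: cl_mult_add_left cl_mult_scale_left cl_mult_assoc cl_one_mult in_cl_vec)
  also have "\<dots> = cl_add ?U (cl_scale (-2 * ?c) ?V)"
    using assms(2) by (simp add: vec_sq cl_mult_scale_right cl_mult_one in_cl_vec cl_scale_scale cl_scale_one)
  also have "?m ?U \<dots> = cl_add (?m ?U ?U) (cl_scale (-2 * ?c) (?m ?U ?V))"
    by (simp add: cl_mult_add_right cl_mult_scale_right)
  also have "\<dots> = cl_add (cl_scale (-1) cl_one) (cl_scale (-2 * ?c) (?m ?U ?V))"
    using assms(1) by (simp add: vec_sq)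
  finally show ?thesis .
qed

context CS
begin

lemma good_vv: "good (mul (cl_vec (p+q) x) (cl_vec (p+q) y))"
proof -
  have h: "\<And>A. cl_vec (p+q) z A \<noteq> 0 \<Longrightarrow> even (card A) = False" for z
    by (simp add: cl_vec_def split: if_splits)
  have "even (card C)" if "mul (cl_vec (p+q) x) (cl_vec (p+q) y) C \<noteq> 0" for C
    using cl_mult_parity[OF h h that] by simp
  thus ?thesis unfolding good_def cl_even_def by (simp add: in_cl_mult)
qed

lemma rho_uv:
  "\<rho> (mul (cl_vec (p+q) u) (cl_vec (p+q) v)) w = (\<Sum>a<p+q. u a *\<^sub>R (\<Sum>b<p+q. v b *\<^sub>R JJ a b w))"
proof -
  have g: "good (\<lambda>C. \<Sum>b<p+q. v b * mul (ev a) (ev b) C)" if "a < p+q" for a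
    by (rule good_sum) (use good_pair that in auto)
  have "\<rho> (mul (cl_vec (p+q) u) (cl_vec (p+q) v)) w
      = (\<Sum>a<p+q. u a *\<^sub>R \<rho> (\<lambda>C. \<Sum>b<p+q. v b * mul (ev a) (ev b) C) w)"
    unfolding vec_mult_expand by (rule rho_sum) (use g in auto)
  also have "\<dots> = (\<Sum>a<p+q. u a *\<^sub>R (\<Sum>b<p+q. v b *\<^sub>R JJ a b w))"
    unfolding JJ_def by (intro sum.cong refl arg_cong[where f="\<lambda>z. _ *\<^sub>R z"] rho_sum) (auto intro: good_pair)
  finally show ?thesis .
qed

lemma uv_sq:
  assumes "vinner p q u u = 1" "vinner p q v v = 1"
  shows "\<rho> (mul (cl_vec (p+q) u) (cl_vec (p+q) v)) (\<rho> (mul (cl_vec (p+q) u) (cl_vec (p+q) v)) w)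
     = - w + (-2 * vinner p q u v) *\<^sub>R \<rho> (mul (cl_vec (p+q) u) (cl_vec (p+q) v)) w"
proof -
  have "\<rho> (mul (cl_vec (p+q) u) (cl_vec (p+q) v)) (\<rho> (mul (cl_vec (p+q) u) (cl_vec (p+q) v)) w)
      = \<rho> (mul (mul (cl_vec (p+q) u) (cl_vec (p+q) v)) (mul (cl_vec (p+q) u) (cl_vec (p+q) v))) w"
    by (simp add: rho_mult good_vv)
  also have "\<dots> = - w + (-2 * vinner p q u v) *\<^sub>R \<rho> (mul (cl_vec (p+q) u) (cl_vec (p+q) v)) w"
    unfolding uvuv[OF assms]
    by (simp add: rho_add rho_scale good_scale good_one good_vv rho_one)
  finally show ?thesis .
qed

lemma iota_rho:
  assumes x: "\<forall>i. i < p \<or> i \<ge> p+q \<longrightarrow> x i = 0"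
  shows "\<rho> (mul (cl_blade {0..<p'}) (cl_vec (p+q) x)) w = (\<Sum>k\<in>{p..<p+q}. x k *\<^sub>R GG k w)"
proof -
  have "cl_vec (p+q) x = (\<lambda>C. \<Sum>a<p+q. x a * ev a C)" by (rule cl_vec_expand)
  also have "\<dots> = (\<lambda>C. \<Sum>a\<in>{p..<p+q}. x a * ev a C)"
  proof (rule ext)
    fix C show "(\<Sum>a<p+q. x a * ev a C) = (\<Sum>a\<in>{p..<p+q}. x a * ev a C)"
      by (rule sum.mono_neutral_right) (use x in auto)
  qed
  finally have "mul (cl_blade {0..<p'}) (cl_vec (p+q) x) = (\<lambda>C. \<Sum>a\<in>{p..<p+q}. x a * mul (cl_blade {0..<p'}) (ev a) C)"
    by (simp add: mul_lincomb_right)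
  moreover have "\<rho> (\<lambda>C. \<Sum>a\<in>{p..<p+q}. x a * mul (cl_blade {0..<p'}) (ev a) C) w = (\<Sum>k\<in>{p..<p+q}. x k *\<^sub>R GG k w)"
    unfolding GG_def by (rule rho_sum) (auto intro: good_GGe)
  ultimately show ?thesis by simp
qed

context
  fixes Pm assumes Pm: "Pm \<in> equiv_maps p q \<rho>"
begin

lemma uv_skew:
  assumes u: "\<forall>i. i \<ge> p' \<longrightarrow> u i = 0" and v: "\<forall>i. i \<ge> p' \<longrightarrow> v i = 0"
  shows "bb Pm (\<rho> (mul (cl_vec (p+q) u) (cl_vec (p+q) v)) s) t + bb Pm s (\<rho> (mul (cl_vec (p+q) u) (cl_vec (p+q) v)) t)
       = (-2 * vinner p q u v) * bb Pm s t"
proof -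
  have trm: "u a * (v b * (bb Pm (JJ a b s) t + bb Pm s (JJ a b t)))
      = (if b = a then u a * v a * (-2 * bb Pm s t) else 0)" if ab: "a < p+q" "b < p+q" for a b
  proof (cases "a < p' \<and> b < p'")
    case True
    show ?thesis
    proof (cases "b = a")
      case True
      have "JJ a a w = - w" for w using JJ_sq[OF ab(1), of w] \<open>a < p' \<and> b < p'\<close> by (simp add: metric_P)
      thus ?thesis using True by (simp add: bb_neg1[OF Pm] bb_neg2[OF Pm])
    next
      case False
      thus ?thesis using skew_JJ[OF Pm ab(1,2), of s t] \<open>a < p' \<and> b < p'\<close> by auto
    qed
  next
    case False
    hence "u a * v b = 0" using u v by auto
    thus ?thesis using u v False by auto
  qed
  have "bb Pm (\<rho> (mul (cl_vec (p+q) u) (cl_vec (p+q) v)) s) t + bb Pm s (\<rho> (mul (cl_vec (p+q) u) (cl_vec (p+q) v)) t)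
      = (\<Sum>a<p+q. u a * (\<Sum>b<p+q. v b * (bb Pm (JJ a b s) t + bb Pm s (JJ a b t))))"
    unfolding rho_uv
    by (simp add: bb_sum1[OF Pm] bb_sum2[OF Pm] bb_scale1[OF Pm] bb_scale2[OF Pm] sum.distrib distrib_left)
  also have "\<dots> = (\<Sum>a<p+q. \<Sum>b<p+q. if b = a then u a * v a * (-2 * bb Pm s t) else 0)"
    using trm by (simp add: sum_distrib_left)
  also have "\<dots> = (\<Sum>a<p+q. u a * v a * (-2 * bb Pm s t))"
    by (simp add: sum.delta)
  also have "\<dots> = (-2 * vinner p q u v) * bb Pm s t"
  proof -
    have "vinner p q u v = (\<Sum>a<p+q. u a * v a)"
      unfolding vinner_def
    proof (intro sum.cong refl)
      fix a assume "a \<in> {..<p+q}"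
      show "metric p a * u a * v a = u a * v a"
        using u metric_P[of a] by (cases "a < p'") auto
    qed
    thus ?thesis by (simp add: sum_distrib_left sum_distrib_right mult_ac)
  qed
  finally show ?thesis .
qed

end

end

lemma blade_sign_abs: "\<bar>blade_sign p A B\<bar> = 1"
  unfolding blade_sign_def abs_mult power_abs abs_prod
  by (simp add: metric_def prod.neutral)

lemma mult_bound:
  assumes x: "\<And>A. \<bar>x A\<bar> \<le> X" and y: "\<And>B. \<bar>y B\<bar> \<le> Y"
  shows "\<bar>cl_mult p q x y C\<bar> \<le> real (card (Pow {0..<p+q})) * real (card (Pow {0..<p+q})) * X * Y"
proof -
  let ?S = "Pow {0..<p+q}"
  have X0: "0 \<le> X" using x[of "{}"] by linarith
  have "\<bar>cl_mult p q x y C\<bar> \<le> (\<Sum>A\<in>?S. \<Sum>B\<in>?S. \<bar>if (A - B) \<union> (B - A) = C then blade_sign p A B * x A * y B else 0\<bar>)"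
    unfolding cl_mult_def by (rule order_trans[OF sum_abs]) (intro sum_mono sum_abs)
  also have "\<dots> \<le> (\<Sum>A\<in>?S. \<Sum>B\<in>?S. X * Y)"
  proof (intro sum_mono)
    fix A B
    have "\<bar>blade_sign p A B * x A * y B\<bar> = \<bar>x A\<bar> * \<bar>y B\<bar>" by (simp add: abs_mult blade_sign_abs)
    also have "\<dots> \<le> X * Y" using x y X0 by (intro mult_mono) auto
    finally show "\<bar>if (A - B) \<union> (B - A) = C then blade_sign p A B * x A * y B else 0\<bar> \<le> X * Y"
      using X0 y[of B] by (auto intro: mult_nonneg_nonneg)
  qed
  also have "\<dots> = real (card ?S) * real (card ?S) * X * Y" by simp
  finally show ?thesis .
qed

lemma pow_bound:
  assumes a: "\<And>A. \<bar>a A\<bar> \<le> M"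
  shows "\<bar>cl_pow p q a k A\<bar> \<le> (real (card (Pow {0..<p+q})) * real (card (Pow {0..<p+q})) * M) ^ k"
proof (induction k arbitrary: A)
  case 0
  then show ?case by (simp add: cl_one_def)
next
  case (Suc k)
  show ?case
    using mult_bound[of a M "cl_pow p q a k" _ p q A, OF a Suc.IH] by (simp add: mult_ac)
qed

lemma exists_bound: "finite (Pow {0..<p+q}) \<Longrightarrow> in_cl (p+q) a \<Longrightarrow> \<exists>M. \<forall>A. \<bar>a A\<bar> \<le> M"
proof -
  assume "in_cl (p+q) a"
  hence "\<bar>a A\<bar> \<le> (\<Sum>B\<in>Pow {0..<p+q}. \<bar>a B\<bar>)" for A
  proof (cases "A \<subseteq> {0..<p+q}")
    case True
    thus ?thesis by (intro member_le_sum) auto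
  next
    case False
    hence "a A = 0" using \<open>in_cl (p+q) a\<close> unfolding in_cl_def by blast
    thus ?thesis by (simp add: sum_nonneg)
  qed
  thus ?thesis by blast
qed

lemma summable_pow_coeff:
  assumes "in_cl (p+q) a"
  shows "summable (\<lambda>k. norm (cl_pow p q a k A / fact k))"
proof -
  obtain M where M: "\<And>A. \<bar>a A\<bar> \<le> M" using exists_bound[OF _ assms] by auto
  let ?R = "real (card (Pow {0..<p+q})) * real (card (Pow {0..<p+q})) * M"
  show ?thesis
  proof (rule summable_comparison_test)
    show "\<exists>N. \<forall>k\<ge>N. norm (norm (cl_pow p q a k A / fact k)) \<le> inverse (fact k) * ?R ^ k"
      using pow_bound[OF M] by (auto simp: divide_simps mult.commute)
    show "summable (\<lambda>k. inverse (fact k) * ?R ^ k)" by (rule summable_exp)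
  qed
qed

lemma binom_alt:
  "(\<Sum>i\<le>m. (-1)^i / (fact i * fact (m - i)) :: real) = (if m = 0 then 1 else 0)"
proof (cases "m = 0")
  case False
  have "(\<Sum>i\<le>m. (-1)^i / (fact i * fact (m - i)) :: real) = (\<Sum>i\<le>m. (-1)^i * of_nat (m choose i)) / fact m"
    unfolding sum_divide_distrib
    by (intro sum.cong refl) (simp add: binomial_fact field_simps)
  also have "\<dots> = 0" using False choose_alternating_sum[of m] by simp
  finally show ?thesis using False by simp
qed simp

context CS
begin

lemma good_pow: "good a \<Longrightarrow> good (cl_pow p q a k)"
  by (induction k) (simp_all add: good_one good_mult)

lemma good_exp:
  assumes "good a"
  shows "good (cl_exp p q a)"
proof -
  have "cl_exp p q a A = 0" if "\<not> (A \<subseteq> {0..<p+q} \<and> even (card A))" for A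
  proof -
    have "\<And>k. cl_pow p q a k A = 0"
      using good_pow[OF assms] that unfolding good_def in_cl_def cl_even_def by blast
    thus ?thesis unfolding cl_exp_def by simp
  qed
  thus ?thesis unfolding good_def in_cl_def cl_even_def by blast
qed

definition Se :: "nat set set" where "Se = {A. A \<subseteq> {0..<p+q} \<and> even (card A)}"

lemma finite_Se: "finite Se"
  unfolding Se_def by (rule finite_subset[of _ "Pow {0..<p+q}"]) auto

lemma good_expand:
  assumes "good x"
  shows "x = (\<lambda>C. \<Sum>A\<in>Se. x A * cl_blade A C)"
proof (rule ext)
  fix C
  have "(\<Sum>A\<in>Se. x A * cl_blade A C) = (\<Sum>A\<in>Se. if A = C then x C else 0)"
    by (intro sum.cong refl) (auto simp: cl_blade_def)
  also have "\<dots> = (if C \<in> Se then x C else 0)" using finite_Se by (simp add: sum.delta')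
  also have "\<dots> = x C" using assms unfolding good_def in_cl_def cl_even_def Se_def by auto
  finally show "x C = (\<Sum>A\<in>Se. x A * cl_blade A C)" by simp
qed

lemma rho_expand:
  assumes "good x"
  shows "\<rho> x w = (\<Sum>A\<in>Se. x A *\<^sub>R \<rho> (cl_blade A) w)"
proof -
  have "\<rho> x w = \<rho> (\<lambda>C. \<Sum>A\<in>Se. x A * cl_blade A C) w" using good_expand[OF assms] by simp
  also have "\<dots> = (\<Sum>A\<in>Se. x A *\<^sub>R \<rho> (cl_blade A) w)"
    by (rule rho_sum[OF finite_Se]) (auto simp: Se_def intro: good_blade)
  finally show ?thesis .
qed

context
  fixes Pm assumes Pm: "Pm \<in> equiv_maps p q \<rho>"
begin

lemma bb_expand:
  assumes "good x" "good y"
  shows "bb Pm (\<rho> x s) (\<rho> y t) = (\<Sum>A\<in>Se. \<Sum>B\<in>Se. x A * y B * bb Pm (\<rho> (cl_blade A) s) (\<rho> (cl_blade B) t))"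
  unfolding rho_expand[OF assms(1)] rho_expand[OF assms(2)]
  by (simp add: bb_sum1[OF Pm] bb_sum2[OF Pm] bb_scale1[OF Pm] bb_scale2[OF Pm] sum_distrib_left mult_ac)
    (rule sum.swap)

lemma pow_rel:
  assumes ga: "good a" and sk: "\<And>s t. bb Pm (\<rho> a s) t + bb Pm s (\<rho> a t) = 0"
  shows "bb Pm (\<rho> (cl_pow p q a j) s) (\<rho> (cl_pow p q a k) t) = (-1)^j * bb Pm s (\<rho> (cl_pow p q a (j+k)) t)"
proof (induction j arbitrary: k)
  case 0
  then show ?case by (simp add: rho_one)
next
  case (Suc j)
  have "bb Pm (\<rho> (cl_pow p q a (Suc j)) s) (\<rho> (cl_pow p q a k) t)
      = bb Pm (\<rho> a (\<rho> (cl_pow p q a j) s)) (\<rho> (cl_pow p q a k) t)"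
    by (simp add: rho_mult ga good_pow)
  also have "\<dots> = - bb Pm (\<rho> (cl_pow p q a j) s) (\<rho> a (\<rho> (cl_pow p q a k) t))"
    using sk[of "\<rho> (cl_pow p q a j) s" "\<rho> (cl_pow p q a k) t"] by simp
  also have "\<rho> a (\<rho> (cl_pow p q a k) t) = \<rho> (cl_pow p q a (Suc k)) t"
    by (simp add: rho_mult ga good_pow)
  also have "bb Pm (\<rho> (cl_pow p q a j) s) (\<rho> (cl_pow p q a (Suc k)) t) = (-1)^j * bb Pm s (\<rho> (cl_pow p q a (j + Suc k)) t)"
    by (rule Suc.IH)
  finally show ?case by simp
qed

lemma exp_inv:
  assumes ga: "good a" and sk: "\<And>s t. bb Pm (\<rho> a s) t + bb Pm s (\<rho> a t) = 0"
  shows "bb Pm (\<rho> (cl_exp p q a) s) (\<rho> (cl_exp p q a) t) = bb Pm s t"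
proof -
  let ?P = "cl_pow p q a"
  let ?al = "\<lambda>j A. ?P j A / fact j"
  let ?c = "\<lambda>A B. bb Pm (\<rho> (cl_blade A) s) (\<rho> (cl_blade B) t)"
  let ?g = "\<lambda>A B m. \<Sum>i\<le>m. ?al i A * ?al (m - i) B"
  have icl: "in_cl (p+q) a" using ga good_def by blast
  have hs: "summable (\<lambda>k. norm (?al k A))" for A by (rule summable_pow_coeff[OF icl])
  have E: "cl_exp p q a A = (\<Sum>j. ?al j A)" for A by (simp add: cl_exp_def)
  have cp: "?g A B sums (cl_exp p q a A * cl_exp p q a B)" for A B
    unfolding E by (rule Cauchy_product_sums[OF hs hs])
  have cps: "summable (?g A B)" "suminf (?g A B) = cl_exp p q a A * cl_exp p q a B" for A B
    using cp[of A B] by (auto simp: sums_iff)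
  have sg: "summable (\<lambda>m. ?g A B m * ?c A B)" for A B
    using cp[of A B] by (intro summable_mult2) (auto simp: sums_iff)
  have "bb Pm (\<rho> (cl_exp p q a) s) (\<rho> (cl_exp p q a) t)
      = (\<Sum>A\<in>Se. \<Sum>B\<in>Se. cl_exp p q a A * cl_exp p q a B * ?c A B)"
    by (rule bb_expand[OF good_exp[OF ga] good_exp[OF ga]])
  also have "\<dots> = (\<Sum>A\<in>Se. \<Sum>B\<in>Se. \<Sum>m. ?g A B m * ?c A B)"
  proof (intro sum.cong refl)
    fix A B
    have "cl_exp p q a A * cl_exp p q a B * ?c A B = suminf (?g A B) * ?c A B" by (simp only: cps(2))
    also have "\<dots> = (\<Sum>m. ?g A B m * ?c A B)" by (rule suminf_mult2[OF cps(1)])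
    finally show "cl_exp p q a A * cl_exp p q a B * ?c A B = (\<Sum>m. ?g A B m * ?c A B)" .
  qed
  also have "\<dots> = (\<Sum>A\<in>Se. \<Sum>m. \<Sum>B\<in>Se. ?g A B m * ?c A B)"
    using sg by (intro sum.cong refl) (simp add: suminf_sum)
  also have "\<dots> = (\<Sum>m. \<Sum>A\<in>Se. \<Sum>B\<in>Se. ?g A B m * ?c A B)"
    using sg by (simp add: suminf_sum summable_sum)
  also have "\<dots> = (\<Sum>m. if m = 0 then bb Pm s t else 0)"
  proof (rule arg_cong[where f=suminf], rule ext)
    fix m
    have "(\<Sum>A\<in>Se. \<Sum>B\<in>Se. ?g A B m * ?c A B)
        = (\<Sum>i\<le>m. (\<Sum>A\<in>Se. \<Sum>B\<in>Se. ?P i A * ?P (m - i) B * ?c A B) / (fact i * fact (m - i)))"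
      by (simp add: sum_distrib_left sum_distrib_right sum_divide_distrib sum.swap[of _ "{..m}"]
          mult_ac)
    also have "\<dots> = (\<Sum>i\<le>m. bb Pm (\<rho> (?P i) s) (\<rho> (?P (m - i)) t) / (fact i * fact (m - i)))"
      using bb_expand[OF good_pow[OF ga] good_pow[OF ga]] by simp
    also have "\<dots> = (\<Sum>i\<le>m. (-1)^i / (fact i * fact (m - i)) * bb Pm s (\<rho> (?P m) t))"
      by (intro sum.cong refl) (simp add: pow_rel[OF ga sk])
    also have "\<dots> = (if m = 0 then 1 else 0) * bb Pm s (\<rho> (?P m) t)"
      unfolding sum_distrib_right[symmetric] binom_alt ..
    also have "\<dots> = (if m = 0 then bb Pm s t else 0)"
      by (simp add: rho_one)
    finally show "(\<Sum>A\<in>Se. \<Sum>B\<in>Se. ?g A B m * ?c A B) = (if m = 0 then bb Pm s t else 0)" .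
  qed
  also have "\<dots> = bb Pm s t"
    using sums_single[of 0 "\<lambda>_. bb Pm s t"] by (simp add: sums_iff)
  finally show ?thesis .
qed

end

end

lemma cl_mult_zero_right: "cl_mult p q x (\<lambda>_. 0) = (\<lambda>_. 0)"
  by (rule ext) (simp add: cl_mult_def cong: if_cong)

lemma inverse_even:
  assumes g: "in_cl (p+q) g" "cl_even g" and h: "in_cl (p+q) h"
    and gh: "cl_mult p q g h = cl_one" and hg: "cl_mult p q h g = cl_one"
  shows "cl_even h"
proof -
  define h0 where "h0 = (\<lambda>A. if even (card A) then h A else 0)"
  define h1 where "h1 = (\<lambda>A. if even (card A) then 0 else h A)"
  have hsplit: "h = cl_add h0 h1" by (rule ext) (simp add: h0_def h1_def cl_add_def)
  have par0: "\<And>A. h0 A \<noteq> 0 \<Longrightarrow> even (card A) = True" by (simp add: h0_def split: if_splits)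
  have par1: "\<And>A. h1 A \<noteq> 0 \<Longrightarrow> even (card A) = False" by (simp add: h1_def split: if_splits)
  have parg: "\<And>A. g A \<noteq> 0 \<Longrightarrow> even (card A) = True" using g(2) by (simp add: cl_even_def)
  have z: "cl_mult p q g h1 = (\<lambda>_. 0)"
  proof (rule ext)
    fix C
    show "cl_mult p q g h1 C = 0"
    proof (cases "even (card C)")
      case True
      show ?thesis
      proof (rule ccontr)
        assume "cl_mult p q g h1 C \<noteq> 0"
        from cl_mult_parity[OF parg par1 this] True show False by simp
      qed
    next
      case False
      have "cl_mult p q g h0 C = 0"
      proof (rule ccontr)
        assume "cl_mult p q g h0 C \<noteq> 0"
        from cl_mult_parity[OF parg par0 this] False show False by simp
      qed
      moreover have "cl_one C = 0" using False by (auto simp: cl_one_def)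
      moreover have "cl_mult p q g h C = cl_mult p q g h0 C + cl_mult p q g h1 C"
        by (subst hsplit) (simp only: cl_mult_add_right, simp add: cl_add_def)
      ultimately show ?thesis using gh by simp
    qed
  qed
  have icl1: "in_cl (p+q) h1" using h by (simp add: in_cl_def h1_def)
  have "h1 = cl_mult p q cl_one h1" by (simp add: cl_one_mult[OF icl1])
  also have "\<dots> = cl_mult p q (cl_mult p q h g) h1" by (simp add: hg)
  also have "\<dots> = cl_mult p q h (cl_mult p q g h1)" by (rule cl_mult_assoc)
  also have "\<dots> = (\<lambda>_. 0)" by (simp add: z cl_mult_zero_right)
  finally have "h1 = (\<lambda>_. 0)" .
  thus ?thesis unfolding cl_even_def by (metis h1_def)
qed

context CS
begin

lemma good_iota_elem: "good (mul (cl_blade {0..<p'}) (cl_vec (p+q) x))"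
proof -
  have h1: "\<And>A. cl_blade {0..<p'} A \<noteq> 0 \<Longrightarrow> even (card A) = False"
    using p'mod by (simp add: cl_blade_def split: if_splits) presburger
  have h2: "\<And>A. cl_vec (p+q) x A \<noteq> 0 \<Longrightarrow> even (card A) = False"
    by (simp add: cl_vec_def split: if_splits)
  have "even (card C)" if "mul (cl_blade {0..<p'}) (cl_vec (p+q) x) C \<noteq> 0" for C
    using cl_mult_parity[OF h1 h2 that] by simp
  thus ?thesis unfolding good_def cl_even_def by (simp add: in_cl_mult)
qed

lemma two_set: "card A = 2 \<Longrightarrow> \<exists>x y. x < y \<and> A = {x, y}" for A :: "nat set"
proof -
  assume "card A = 2"
  then obtain x y where "A = {x, y}" "x \<noteq> y" by (auto simp: card_2_iff)
  note xy = this
  show ?thesis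
  proof (cases "x < y")
    case True thus ?thesis using \<open>A = {x, y}\<close> by blast
  next
    case False
    hence "y < x" using \<open>x \<noteq> y\<close> by simp
    moreover have "A = {y, x}" using \<open>A = {x, y}\<close> by auto
    ultimately show ?thesis by blast
  qed
qed

context
  fixes Pm assumes Pm: "Pm \<in> equiv_maps p q \<rho>"
begin

lemma gen_inv:
  assumes "g \<in> spin_p'_gens p q p' \<union> spin0_gens p q p' \<union> iota_pin_gens p q p'"
  shows "good g \<and> (\<forall>s t. bb Pm (\<rho> g s) (\<rho> g t) = bb Pm s t)"
  using assms
proof (elim UnE)
  assume "g \<in> spin_p'_gens p q p'"
  then obtain u v where g: "g = mul (cl_vec (p+q) u) (cl_vec (p+q) v)"
    and u: "\<forall>i. i \<ge> p' \<longrightarrow> u i = 0" and v: "\<forall>i. i \<ge> p' \<longrightarrow> v i = 0"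
    and uu: "\<bar>vinner p q u u\<bar> = 1" and vv: "\<bar>vinner p q v v\<bar> = 1"
    unfolding spin_p'_gens_def by blast
  have nn: "vinner p q x x \<ge> 0" if "\<forall>i. i \<ge> p' \<longrightarrow> x i = 0" for x
    unfolding vinner_def
  proof (intro sum_nonneg)
    fix i show "0 \<le> metric p i * x i * x i"
      using that metric_P[of i] by (cases "i < p'") auto
  qed
  have uu1: "vinner p q u u = 1" using uu nn[OF u] by simp
  have vv1: "vinner p q v v = 1" using vv nn[OF v] by simp
  show ?thesis unfolding g
  proof (intro conjI allI good_vv)
    fix s t
    show "bb Pm (\<rho> (mul (cl_vec (p+q) u) (cl_vec (p+q) v)) s) (\<rho> (mul (cl_vec (p+q) u) (cl_vec (p+q) v)) t) = bb Pm s t"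
      by (rule inv_from_skew[OF Pm uv_skew[OF Pm u v] uv_sq[OF uu1 vv1]])
  qed
next
  assume "g \<in> spin0_gens p q p'"
  then obtain a where g: "g = cl_exp p q a"
    and a: "\<forall>A. a A \<noteq> 0 \<longrightarrow> A \<subseteq> {p'..<p+q} \<and> card A = 2"
    unfolding spin0_gens_def by blast
  have ga: "good a" using a unfolding good_def in_cl_def cl_even_def by force
  have sk: "bb Pm (\<rho> a s) t + bb Pm s (\<rho> a t) = 0" for s t
  proof -
    have "bb Pm (\<rho> a s) t + bb Pm s (\<rho> a t)
        = (\<Sum>A\<in>Se. a A * (bb Pm (\<rho> (cl_blade A) s) t + bb Pm s (\<rho> (cl_blade A) t)))"
      unfolding rho_expand[OF ga]
      by (simp add: bb_sum1[OF Pm] bb_sum2[OF Pm] bb_scale1[OF Pm] bb_scale2[OF Pm] sum.distrib distrib_left)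
    also have "\<dots> = 0"
    proof (rule sum.neutral, rule ballI)
      fix A assume "A \<in> Se"
      show "a A * (bb Pm (\<rho> (cl_blade A) s) t + bb Pm s (\<rho> (cl_blade A) t)) = 0"
      proof (cases "a A = 0")
        case False
        hence A: "A \<subseteq> {p'..<p+q}" "card A = 2" using a by auto
        then obtain x y where xy: "x < y" "A = {x, y}" using two_set by blast
        have xy2: "p' \<le> x" "y < p+q" using A xy by auto
        have "cl_blade A = mul (ev x) (ev y)" using pair_blade[OF xy(1) xy2(2)] xy by simp
        hence "\<rho> (cl_blade A) = JJ x y" unfolding JJ_def by simp
        moreover have "bb Pm (JJ x y s) t + bb Pm s (JJ x y t) = 0"
          by (rule skew_JJ[OF Pm]) (use xy xy2 in auto)
        ultimately show ?thesis by simp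
      qed simp
    qed
    finally show ?thesis .
  qed
  show ?thesis unfolding g using good_exp[OF ga] exp_inv[OF Pm ga sk] by blast
next
  assume "g \<in> iota_pin_gens p q p'"
  then obtain x where g: "g = mul (cl_blade {0..<p'}) (cl_vec (p+q) x)"
    and x: "\<forall>i. i < p \<or> i \<ge> p+q \<longrightarrow> x i = 0" and xx: "(\<Sum>i\<in>{p..<p+q}. (x i)\<^sup>2) = 1"
    unfolding iota_pin_gens_def by blast
  have T: "\<rho> g w = (\<Sum>k\<in>{p..<p+q}. x k *\<^sub>R GG k w)" for w
    unfolding g by (rule iota_rho[OF x])
  show ?thesis
  proof (intro conjI allI)
    show "good g" unfolding g by (rule good_iota_elem)
    fix s t
    show "bb Pm (\<rho> g s) (\<rho> g t) = bb Pm s t"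
    proof (rule inv_from_skew[OF Pm, where \<kappa> = 0])
      fix s t show "bb Pm (\<rho> g s) t + bb Pm s (\<rho> g t) = 0 * bb Pm s t"
        unfolding T using iota_skew[OF Pm] by simp
    next
      fix w show "\<rho> g (\<rho> g w) = - w + 0 *\<^sub>R \<rho> g w"
        unfolding T using iota_sq[OF xx] by simp
    qed
  qed
qed

lemma K_inv:
  assumes "g \<in> K_hat p q p'"
  shows "good g \<and> (\<forall>s t. bb Pm (\<rho> g s) (\<rho> g t) = bb Pm s t)"
  using assms unfolding K_hat_def
proof (induction rule: cl_gen_group.induct)
  case one
  then show ?case by (simp add: good_one rho_one)
next
  case (gen g)
  then show ?case by (rule gen_inv)
next
  case (inv g h)
  have gg: "good g" and ginv: "\<forall>s t. bb Pm (\<rho> g s) (\<rho> g t) = bb Pm s t" using gen_inv[OF inv(1)] by auto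
  have "cl_even h" using inverse_even[of p q g h] gg inv unfolding good_def by blast
  hence gh: "good h" using inv(2) unfolding good_def by simp
  have "\<rho> g (\<rho> h w) = w" for w using rho_mult[OF gg gh, of w] inv(3) by (simp add: rho_one)
  hence "bb Pm (\<rho> h s) (\<rho> h t) = bb Pm s t" for s t
    using ginv[rule_format, of "\<rho> h s" "\<rho> h t"] by simp
  thus ?case using gh by blast
next
  case (mult g h)
  thus ?case by (simp add: good_mult rho_mult)
qed

end

lemma inj_part:
  assumes P1: "Pm1 \<in> equiv_maps p q \<rho>" and P2: "Pm2 \<in> equiv_maps p q \<rho>"
    and eq: "bb Pm1 = bb Pm2"
  shows "Pm1 = Pm2"
proof -
  have c0: "Pm1 u v 0 = Pm2 u v 0" for u v
  proof -
    have "bb Pm1 (LL u) v = bb Pm2 (LL u) v" using eq by simp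
    hence "Pm1 (- u) v 0 = Pm2 (- u) v 0" unfolding bb_def LL_sq .
    thus ?thesis by (simp add: Pm_lneg[OF P1] Pm_lneg[OF P2])
  qed
  have "Pm1 u v c = Pm2 u v c" for u v c
  proof (cases "c < p+q")
    case True
    show ?thesis
    proof (cases "c = 0")
      case True thus ?thesis using c0 by simp
    next
      case False
      have "Pm1 (JJ 0 c u) v 0 = Pm2 (JJ 0 c u) v 0" by (rule c0)
      hence "- metric p c * Pm1 u v c = - metric p c * Pm2 u v c"
        using K0[OF P1 \<open>c < p+q\<close> False] K0[OF P2 \<open>c < p+q\<close> False] by simp
      thus ?thesis using metric_cases[of p c] by auto
    qed
  next
    case False
    thus ?thesis using Pm_inV[OF P1] Pm_inV[OF P2] by simp
  qed
  thus ?thesis by (intro ext)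
qed

end

theorem mainTheorem6:
  fixes p q p' p'' :: nat and \<rho> :: "cl \<Rightarrow> 'w::real_vector \<Rightarrow> 'w"
  assumes "p = p' + p''" and "p' mod 4 = 3" and "cl0_module p q \<rho>"
  shows "(\<forall>Pm\<in>equiv_maps p q \<rho>. b_form p q p' \<rho> Pm \<in> invariant_sym_forms p q p' \<rho>)
       \<and> (\<forall>Pm1\<in>equiv_maps p q \<rho>. \<forall>Pm2\<in>equiv_maps p q \<rho>. \<forall>a c.
            b_form p q p' \<rho> (\<lambda>s t i. a * Pm1 s t i + c * Pm2 s t i)
              = (\<lambda>s t. a * b_form p q p' \<rho> Pm1 s t + c * b_form p q p' \<rho> Pm2 s t))
       \<and> inj_on (b_form p q p' \<rho>) (equiv_maps p q \<rho>)"
proof -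
  interpret CS p q p' p'' \<rho> by unfold_locales (use assms in auto)
  have P1: "b_form p q p' \<rho> Pm \<in> invariant_sym_forms p q p' \<rho>" if Pm: "Pm \<in> equiv_maps p q \<rho>" for Pm
    unfolding b_form_bb invariant_sym_forms_def
    using bb_bil[OF Pm] bb_sym[OF Pm] K_inv[OF Pm] by blast
  have P2: "b_form p q p' \<rho> (\<lambda>s t i. a * Pm1 s t i + c * Pm2 s t i)
              = (\<lambda>s t. a * b_form p q p' \<rho> Pm1 s t + c * b_form p q p' \<rho> Pm2 s t)" for Pm1 Pm2 a c
    unfolding b_form_def vinner_def
    by (intro ext) (simp add: sum.distrib sum_distrib_left algebra_simps)
  have P3: "inj_on (b_form p q p' \<rho>) (equiv_maps p q \<rho>)"
    unfolding inj_on_def b_form_bb using inj_part by blast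
  show ?thesis using P1 P2 P3 by blast
qed

end
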